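(* For every $\ell,n_0\in\mathbb N$ there exists a family $(F_1,(a_1,b_1)),\dots,(F_\ell,(a_\ell,b_\ell))$ of edge-rooted graphs, where $F_i$ has $n_i\ge n_0$ vertices, such that: (1) each $F_i$ is rigid; (2) for every $i\in[\ell]$ and every pair of distinct vertices $u,v\in V(F_i)$ there exist $x,y,z\in N_{F_i}(u)\cap N_{F_i}(v)$ with $xy,xz,yz\in E(F_i)$; (3) $N_{F_i}(a_i)\setminus N_{F_i}(b_i)\neq\emptyset$ and $N_{F_i}(b_i)\setminus N_{F_i}(a_i)\ne\emptyset$ for every $i$; (4) $d_{F_i}(a_i)<d_{F_i}(b_i)$ for every $i$; (5) $d_{F_i}(u)<d_{F_j}(v)$ for all $i<j$ in $[\ell]$, $u\in V(F_i)$, $v\in V(F_j)$; (6) for $i,j\in[\ell]$ let $\mathcal D_{i,j}$ be the set of all values $d_{F_i}(u)+d_{F_i}(u')+d_{F_j}(v)+d_{F_j}(v')$, $d_{F_i}(u)+d_{F_i}(u')+d_{F_j}(v)$ and $d_{F_i}(u)+d_{F_j}(v)$ with $u,u'\in V(F_i)$, $v,v'\in V(F_j)$; then $\mathcal D_{i,j}\cap\mathcal D_{i',j'}=\emptyset$ whenever $\{i,j\}\neq\{i',j'\}$; (7) $\bigcup_{i,j\in[\ell]}\mathcal D_{i,j}$ is disjoint from $\{d_{F_t}(w): t\in[\ell], w\in V(F_t)\}$; (8) for every $i\in[\ell]$ there is $S_i\subseteq V(F_i)\setminus\{a_i,b_i\}$ such that $d_{F_i}(u)>d_{F_i}(v)$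 for all $u\in S_i$, $v\in V(F_i)\setminus S_i$; $d_{F_i}(u)\ne d_{F_i}(v)$ for all distinct $u,v\in S_i$; and $N_{F_i}(u)\cap S_i\neq N_{F_i}(v)\cap S_i$ for all distinct $u,v\in V(F_i)\setminus S_i$.
   Context: An edge-rooted graph is a pair $(F,(a,b))$ where $F$ is a finite simple graph and $(a,b)$ is an orientation of an edge $ab\in E(F)$. A graph $F$ is rigid if its only homomorphism to itself (endomorphism) is the identity. $N_F(v)$ and $d_F(v)$ denote neighbourhood and degree. *)

theory Defs
  imports Main
begin

definition simple_graph :: "nat set \<Rightarrow> (nat \<Rightarrow> nat \<Rightarrow> bool) \<Rightarrow> bool" where
  "simple_graph V E \<longleftrightarrow> finite V \<and> (\<forall>u v. E u v \<longrightarrow> u \<in> V \<and> v \<in> V)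
     \<and> (\<forall>u v. E u v \<longrightarrow> E v u) \<and> (\<forall>u. \<not> E u u)"

definition nbhd :: "nat set \<Rightarrow> (nat \<Rightarrow> nat \<Rightarrow> bool) \<Rightarrow> nat \<Rightarrow> nat set" where
  "nbhd V E u = {v \<in> V. E u v}"

definition deg :: "nat set \<Rightarrow> (nat \<Rightarrow> nat \<Rightarrow> bool) \<Rightarrow> nat \<Rightarrow> nat" where
  "deg V E u = card (nbhd V E u)"

definition graph_hom :: "nat set \<Rightarrow> (nat \<Rightarrow> nat \<Rightarrow> bool) \<Rightarrow> nat set \<Rightarrow> (nat \<Rightarrow> nat \<Rightarrow> bool) \<Rightarrow> (nat \<Rightarrow> nat) \<Rightarrow> bool" where
  "graph_hom V E V' E' f \<longleftrightarrow> (\<forall>u\<in>V. f u \<in> V') \<and> (\<forall>u v. E u v \<longrightarrow> E' (f u) (f v))"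

definition rigid :: "nat set \<Rightarrow> (nat \<Rightarrow> nat \<Rightarrow> bool) \<Rightarrow> bool" where
  "rigid V E \<longleftrightarrow> (\<forall>f. graph_hom V E V E f \<longrightarrow> (\<forall>u\<in>V. f u = u))"

definition degsums :: "nat set \<Rightarrow> (nat \<Rightarrow> nat \<Rightarrow> bool) \<Rightarrow> nat set \<Rightarrow> (nat \<Rightarrow> nat \<Rightarrow> bool) \<Rightarrow> nat set" where
  "degsums Vi Ei Vj Ej =
     {deg Vi Ei u + deg Vi Ei u' + deg Vj Ej v + deg Vj Ej v' | u u' v v'. u \<in> Vi \<and> u' \<in> Vi \<and> v \<in> Vj \<and> v' \<in> Vj}
   \<union> {deg Vi Ei u + deg Vi Ei u' + deg Vj Ej v | u u' v. u \<in> Vi \<and> u' \<in> Vi \<and> v \<in> Vj}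
   \<union> {deg Vi Ei u + deg Vj Ej v | u v. u \<in> Vi \<and> v \<in> Vj}"

end

theory Submission
  imports Defs
begin

lemma card_ge3_obtain:
  assumes "3 \<le> card A"
  shows "\<exists>x y z. x \<in> A \<and> y \<in> A \<and> z \<in> A \<and> x \<noteq> y \<and> x \<noteq> z \<and> y \<noteq> z"
proof -
  have fA: "finite A" using assms by (metis card.infinite not_numeral_le_zero)
  obtain B where "B \<subseteq> A" "card B = 3" using assms by (meson obtain_subset_with_card_n)
  then obtain x y z where "B = {x,y,z}" "x \<noteq> y" "x \<noteq> z" "y \<noteq> z"
    by (metis card_3_iff)
  then show ?thesis using \<open>B \<subseteq> A\<close> by blast
qed

lemma core_lemma:
  fixes E :: "nat \<Rightarrow> nat \<Rightarrow> bool" and N :: nat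
  assumes oddN: "odd N" and N3: "3 \<le> N"
    and irr: "\<And>x. \<not> E x x"
    and sym: "\<And>x y. E x y \<Longrightarrow> E y x"
    and cyc: "\<And>x. x < N \<Longrightarrow> \<not> E x (Suc x mod N)"
    and alpha: "\<And>x y z. x < N \<Longrightarrow> y < N \<Longrightarrow> z < N \<Longrightarrow> x \<noteq> y \<Longrightarrow> x \<noteq> z \<Longrightarrow> y \<noteq> z
                  \<Longrightarrow> \<not> E x y \<Longrightarrow> \<not> E x z \<Longrightarrow> \<not> E y z \<Longrightarrow> False"
    and hom: "graph_hom {..<N} E {..<N} E f"
  shows "inj_on f {..<N}"
proof (rule ccontr)
  assume ni: "\<not> inj_on f {..<N}"
  have into: "\<And>u. u < N \<Longrightarrow> f u < N" using hom unfolding graph_hom_def by auto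
  have edge: "\<And>u v. E u v \<Longrightarrow> E (f u) (f v)" using hom unfolding graph_hom_def by auto
  have "f ` {..<N} \<subseteq> {..<N}" using into by auto
  moreover have "card (f ` {..<N}) < N"
  proof -
    have "card (f ` {..<N}) \<le> card {..<N}" by (rule card_image_le) simp
    moreover have "card (f ` {..<N}) \<noteq> card {..<N}" using ni eq_card_imp_inj_on by blast
    ultimately show ?thesis by simp
  qed
  ultimately obtain v where v: "v < N" "v \<notin> f ` {..<N}"
  proof -
    assume a: "\<And>v. v < N \<Longrightarrow> v \<notin> f ` {..<N} \<Longrightarrow> thesis"
    show thesis
    proof (rule ccontr)
      assume "\<not> thesis"
      then have "{..<N} \<subseteq> f ` {..<N}" using a by blast
      then have "card {..<N} \<le> card (f ` {..<N})" by (intro card_mono) auto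
      then show False using \<open>card (f ` {..<N}) < N\<close> by simp
    qed
  qed
  define h where "h = (N - 1) div 2"
  define P where "P k = {(v + 1 + 2*k) mod N, (v + 2 + 2*k) mod N}" for k
  have Pne: "\<And>k p q. p \<in> P k \<Longrightarrow> q \<in> P k \<Longrightarrow> \<not> E p q"
  proof -
    fix k p q assume "p \<in> P k" "q \<in> P k"
    have c: "\<not> E ((v + 1 + 2*k) mod N) ((v + 2 + 2*k) mod N)"
    proof -
      have "Suc ((v + 1 + 2*k) mod N) mod N = (v + 2 + 2*k) mod N"
        by (simp add: mod_Suc_eq)
      then show ?thesis using cyc[of "(v + 1 + 2*k) mod N"] N3 by simp
    qed
    then show "\<not> E p q" using \<open>p \<in> P k\<close> \<open>q \<in> P k\<close> irr sym unfolding P_def by auto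
  qed
  have cover: "{..<N} \<subseteq> (\<Union>k<h. {x. x < N \<and> f x \<in> P k})"
  proof
    fix x assume "x \<in> {..<N}"
    then have fx: "f x < N" "f x \<noteq> v" using into v by auto
    define d where "d = (f x + N - v) mod N"
    have d1: "d \<noteq> 0" "d < N"
    proof -
      show "d < N" unfolding d_def using N3 by simp
      show "d \<noteq> 0"
      proof
        assume "d = 0"
        then have "N dvd (f x + N - v)" unfolding d_def by auto
        moreover have "f x + N - v > 0" "f x + N - v < 2 * N" using fx v by auto
        ultimately have "f x + N - v = N"
        proof -
          assume a: "N dvd (f x + N - v)" "f x + N - v > 0" "f x + N - v < 2 * N"
          obtain c where c: "f x + N - v = N * c" using a(1) by (auto elim: dvdE)
          have "c \<noteq> 0" using a(2) c by auto
          moreover have "c < 2" using a(3) c by (cases "c \<ge> 2") (use a(3) c in \<open>auto dest: mult_le_mono2[of 2 c N]\<close>)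
          ultimately have "c = 1" by linarith
          then show ?thesis using c by simp
        qed
        then show False using fx by simp
      qed
    qed
    have fxd: "f x = (v + d) mod N"
    proof -
      have "(v + d) mod N = (v + (f x + N - v)) mod N" unfolding d_def by (simp add: mod_add_right_eq)
      also have "v + (f x + N - v) = f x + N" using v by simp
      finally show ?thesis using fx by simp
    qed
    show "x \<in> (\<Union>k<h. {x. x < N \<and> f x \<in> P k})"
    proof (cases "odd d")
      case True
      define k where "k = (d - 1) div 2"
      have "d = 1 + 2*k" using True d1 unfolding k_def by presburger
      moreover have "k < h" unfolding h_def k_def using d1 True oddN by presburger
      ultimately show ?thesis using fxd \<open>x \<in> {..<N}\<close> unfolding P_def
        by (auto simp: add.assoc)
    next
      case False
      define k where "k = (d - 2) div 2"
      have "d = 2 + 2*k" using False d1 unfolding k_def by presburger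
      moreover have "k < h" unfolding h_def k_def using d1 False oddN by presburger
      ultimately show ?thesis using fxd \<open>x \<in> {..<N}\<close> unfolding P_def
        by (auto simp: add.assoc)
    qed
  qed
  have small: "card {x. x < N \<and> f x \<in> P k} \<le> 2" for k
  proof (rule ccontr)
    assume "\<not> ?thesis"
    then obtain x y z where xyz: "x \<in> {x. x < N \<and> f x \<in> P k}" "y \<in> {x. x < N \<and> f x \<in> P k}"
      "z \<in> {x. x < N \<and> f x \<in> P k}" "x \<noteq> y" "x \<noteq> z" "y \<noteq> z"
      using card_ge3_obtain[of "{x. x < N \<and> f x \<in> P k}"] by force
    have ne: "\<And>a b. a \<in> {x. x < N \<and> f x \<in> P k} \<Longrightarrow> b \<in> {x. x < N \<and> f x \<in> P k} \<Longrightarrow> \<not> E a b"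
      using Pne edge by blast
    show False using alpha[of x y z] xyz ne by auto
  qed
  have "N = card {..<N}" by simp
  also have "\<dots> \<le> card (\<Union>k<h. {x. x < N \<and> f x \<in> P k})"
    by (rule card_mono) (auto intro: cover simp: cover)
  also have "\<dots> \<le> (\<Sum>k<h. card {x. x < N \<and> f x \<in> P k})" by (rule card_UN_le) simp
  also have "\<dots> \<le> (\<Sum>k<h. 2)" by (rule sum_mono) (rule small)
  also have "\<dots> = 2 * h" by simp
  also have "\<dots> < N" unfolding h_def using oddN by presburger
  finally show False by simp
qed


lemma sum_eq_mono_eq:
  fixes a b :: "'a \<Rightarrow> nat"
  assumes "finite A" "\<And>x. x \<in> A \<Longrightarrow> a x \<le> b x" "sum a A = sum b A" "x \<in> A"
  shows "a x = b x"
proof (rule ccontr)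
  assume "a x \<noteq> b x"
  then have "a x < b x" using assms(2,4) by force
  then have "sum a A < sum b A" using assms by (intro sum_strict_mono_ex1) auto
  then show False using assms(3) by simp
qed

lemma rigid_from_inj:
  fixes V :: "nat set" and E :: "nat \<Rightarrow> nat \<Rightarrow> bool"
  assumes sg: "simple_graph V E"
    and injall: "\<And>f. graph_hom V E V E f \<Longrightarrow> inj_on f V"
    and SV: "S \<subseteq> V"
    and s1: "\<And>u v. u \<in> S \<Longrightarrow> v \<in> V - S \<Longrightarrow> deg V E u > deg V E v"
    and s2: "\<And>u v. u \<in> S \<Longrightarrow> v \<in> S \<Longrightarrow> u \<noteq> v \<Longrightarrow> deg V E u \<noteq> deg V E v"
    and s3: "\<And>u v. u \<in> V - S \<Longrightarrow> v \<in> V - S \<Longrightarrow> u \<noteq> v \<Longrightarrow> nbhd V E u \<inter> S \<noteq> nbhd V E v \<inter> S"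
  shows "rigid V E"
  unfolding rigid_def
proof (intro allI impI ballI)
  fix f u assume hom: "graph_hom V E V E f" and uV: "u \<in> V"
  have fin: "finite V" using sg unfolding simple_graph_def by auto
  have into: "\<And>x. x \<in> V \<Longrightarrow> f x \<in> V" using hom unfolding graph_hom_def by auto
  have edge: "\<And>x y. E x y \<Longrightarrow> E (f x) (f y)" using hom unfolding graph_hom_def by auto
  have inj: "inj_on f V" using injall hom by blast
  have img: "f ` V = V"
  proof -
    have "f ` V \<subseteq> V" using into by auto
    moreover have "card (f ` V) = card V" using inj by (simp add: card_image)
    ultimately show ?thesis using fin by (simp add: card_subset_eq)
  qed
  have sub: "f ` nbhd V E x \<subseteq> nbhd V E (f x)" if "x \<in> V" for x
    using into edge unfolding nbhd_def by auto
  have finN: "finite (nbhd V E x)" for x using fin unfolding nbhd_def by auto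
  have degle: "deg V E x \<le> deg V E (f x)" if "x \<in> V" for x
  proof -
    have "deg V E x = card (f ` nbhd V E x)" unfolding deg_def
      by (rule card_image[symmetric]) (rule inj_on_subset[OF inj], auto simp: nbhd_def)
    also have "\<dots> \<le> deg V E (f x)" unfolding deg_def using sub[OF that] finN by (intro card_mono) auto
    finally show ?thesis .
  qed
  have sumeq: "(\<Sum>x\<in>V. deg V E (f x)) = (\<Sum>x\<in>V. deg V E x)"
  proof -
    have "(\<Sum>x\<in>V. deg V E (f x)) = (\<Sum>y\<in>f ` V. deg V E y)" using inj by (simp add: sum.reindex)
    then show ?thesis using img by simp
  qed
  have degeq: "deg V E (f x) = deg V E x" if "x \<in> V" for x
    using sum_eq_mono_eq[of V "\<lambda>x. deg V E x" "\<lambda>x. deg V E (f x)" x] fin degle sumeq that by auto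
  have nbeq: "nbhd V E (f x) = f ` nbhd V E x" if "x \<in> V" for x
  proof -
    have "card (f ` nbhd V E x) = card (nbhd V E (f x))"
      using degeq[OF that] unfolding deg_def
      by (subst card_image) (rule inj_on_subset[OF inj], auto simp: nbhd_def)
    then show ?thesis using sub[OF that] finN card_subset_eq[of "nbhd V E (f x)" "f ` nbhd V E x"] by metis
  qed
  have fixS: "f x = x" if "x \<in> S" for x
  proof -
    have xV: "x \<in> V" using that SV by auto
    have "f x \<in> S"
    proof (rule ccontr)
      assume "f x \<notin> S"
      then have "deg V E x > deg V E (f x)" using s1[of x "f x"] that into xV by auto
      then show False using degeq xV by simp
    qed
    then show ?thesis using s2[of x "f x"] that degeq xV by (metis (no_types))
  qed
  have outT: "f x \<notin> S" if "x \<in> V - S" for x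
  proof
    assume "f x \<in> S"
    then have "f (f x) = f x" by (rule fixS)
    then have "f x = x" using inj that into by (meson DiffD1 inj_on_def)
    then show False using \<open>f x \<in> S\<close> that by auto
  qed
  show "f u = u"
  proof (cases "u \<in> S")
    case True then show ?thesis by (rule fixS)
  next
    case False
    then have uT: "u \<in> V - S" using uV by auto
    have "nbhd V E (f u) \<inter> S = nbhd V E u \<inter> S"
    proof -
      have "f ` nbhd V E u \<inter> S = nbhd V E u \<inter> S"
      proof
        show "f ` nbhd V E u \<inter> S \<subseteq> nbhd V E u \<inter> S"
        proof
          fix y assume "y \<in> f ` nbhd V E u \<inter> S"
          then obtain x where x: "x \<in> nbhd V E u" "y = f x" "y \<in> S" by auto
          have "x \<in> V" using x unfolding nbhd_def by auto
          then have "x \<in> S" using outT x by auto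
          then show "y \<in> nbhd V E u \<inter> S" using fixS x by auto
        qed
      next
        show "nbhd V E u \<inter> S \<subseteq> f ` nbhd V E u \<inter> S"
          using fixS by (auto intro: image_eqI[where x=y for y] rev_image_eqI)
      qed
      then show ?thesis using nbeq uV by simp
    qed
    then show ?thesis using s3[of "f u" u] uT outT into uV by (metis Diff_iff)
  qed
qed


definition NN :: "nat \<Rightarrow> nat" where "NN n = 2*n*n + 8*n + 1"
definition mm :: "nat \<Rightarrow> nat" where "mm n = 9*n + 1"
definition jx :: "nat \<Rightarrow> nat \<Rightarrow> nat" where "jx n t = (t - 8*n) div 2"

definition ST :: "nat \<Rightarrow> nat \<Rightarrow> nat \<Rightarrow> bool" where
  "ST n s t \<longleftrightarrow>
     (odd s \<and> 4*n < s \<and> even (t - 8*n) \<and> jx n t < n*n \<and>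
        (s = 4*n + 1 + 2*(jx n t div n) \<or> s = 8*n - 1 - 2*(jx n t mod n)))
   \<or> (even s \<and> 4*n \<le> s \<and> odd (t - 8*n) \<and> jx n t < n*n \<and>
        (s = 4*n + 2*(jx n t div n) \<or> s = 6*n + 2*(jx n t mod n)))
   \<or> (odd s \<and> s < 4*n \<and> even (t - 8*n) \<and> jx n t < 3*n)
   \<or> (even s \<and> 2 \<le> s \<and> s < 4*n \<and> odd (t - 8*n) \<and> jx n t < 7*n)"

definition Hb :: "nat \<Rightarrow> nat \<Rightarrow> nat \<Rightarrow> bool" where
  "Hb n u v \<longleftrightarrow>
     (odd u \<and> even v \<and> u < 8*n \<and> v < 8*n \<and> u \<le> v + 1)
   \<or> (8*n \<le> u \<and> u < v \<and> odd (v - u) \<and> v - u < 2 * mm n)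
   \<or> (u = 0 \<and> v = NN n - 1)
   \<or> (u < 8*n \<and> 8*n \<le> v \<and> ST n u v)"

definition Hr :: "nat \<Rightarrow> nat \<Rightarrow> nat \<Rightarrow> bool" where
  "Hr n u v \<longleftrightarrow> u < NN n \<and> v < NN n \<and> (Hb n u v \<or> Hb n v u)"

definition Eg :: "nat \<Rightarrow> nat \<Rightarrow> nat \<Rightarrow> bool" where
  "Eg n u v \<longleftrightarrow> u < NN n \<and> v < NN n \<and> u \<noteq> v \<and> \<not> Hr n u v"

definition hdeg :: "nat \<Rightarrow> nat \<Rightarrow> nat" where
  "hdeg n u = card {v. v < NN n \<and> Hr n u v}"

lemma NN_ge: "8*n < NN n" "odd (NN n)" unfolding NN_def by auto

lemma Hr_sym: "Hr n u v \<Longrightarrow> Hr n v u" unfolding Hr_def by auto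

lemma Hb_irr: "1 \<le> n \<Longrightarrow> \<not> Hb n u u"
  unfolding Hb_def NN_def by auto

lemma Hr_irr: "1 \<le> n \<Longrightarrow> \<not> Hr n u u" unfolding Hr_def using Hb_irr by auto

lemma ST_parity: assumes "ST n s t" "8*n \<le> t" shows "odd (s + t)"
proof -
  have "odd (s + (t - 8*n))"
    using assms(1) unfolding ST_def by (elim disjE conjE) simp_all
  then show ?thesis using assms(2) by (simp add: even_add even_diff_nat)
qed

lemma Hb_parity: assumes "Hb n u v" shows "odd (u + v) \<or> (u = 0 \<and> v = NN n - 1)"
  using assms unfolding Hb_def
proof (elim disjE conjE)
  assume "8*n \<le> u" "u < v" "odd (v - u)" "v - u < 2 * mm n"
  then show ?thesis by (simp add: even_add even_diff_nat)
next
  assume "u < 8*n" "8*n \<le> v" "ST n u v"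
  then show ?thesis using ST_parity by blast
qed auto

lemma Hr_parity: "Hr n u v \<Longrightarrow> odd (u + v) \<or> {u, v} = {0, NN n - 1}"
proof -
  assume "Hr n u v"
  then have "Hb n u v \<or> Hb n v u" unfolding Hr_def by simp
  then show ?thesis
  proof
    assume "Hb n u v" then show ?thesis using Hb_parity[of n u v] by auto
  next
    assume "Hb n v u"
    then have "odd (v + u) \<or> (v = 0 \<and> u = NN n - 1)" by (rule Hb_parity)
    then show ?thesis by (auto simp: add.commute insert_commute)
  qed
qed

lemma ST_0: "1 \<le> n \<Longrightarrow> \<not> ST n 0 t" unfolding ST_def by auto

lemma Hr_0: assumes "1 \<le> n" shows "Hr n 0 v \<longleftrightarrow> v = 1 \<or> v = NN n - 1"
proof -
  have "8 * n < NN n" by (rule NN_ge)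
  have a: "Hb n 0 v \<longleftrightarrow> v = NN n - 1" unfolding Hb_def using ST_0[OF assms] assms NN_ge[of n] by (auto simp: NN_def)
  have b: "Hb n v 0 \<longleftrightarrow> v = 1"
  proof
    assume "Hb n v 0"
    then have "odd v \<and> v \<le> 1" unfolding Hb_def using assms NN_ge[of n] by (auto simp: NN_def)
    then show "v = 1" by presburger
  next
    assume "v = 1" then show "Hb n v 0" unfolding Hb_def using assms by simp
  qed
  show ?thesis unfolding Hr_def a b using NN_ge[of n] assms by auto
qed

lemma not_Hr_last_1: assumes "3 \<le> n" shows "\<not> Hr n (NN n - 1) 1"
proof -
  have e: "NN n - 1 - 8*n = 2*n*n" unfolding NN_def by simp
  have j: "jx n (NN n - 1) = n*n" unfolding jx_def e by simp
  have "n*n \<ge> 3*n" using assms by simp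
  then have "\<not> ST n 1 (NN n - 1)" unfolding ST_def j e using assms by simp
  moreover have "NN n - 1 \<noteq> 0" "\<not> NN n - 1 < 8 * n" "1 < 8*n" using NN_ge[of n] assms by auto
  ultimately have "\<not> Hb n (NN n - 1) 1" "\<not> Hb n 1 (NN n - 1)" unfolding Hb_def by auto
  then show ?thesis unfolding Hr_def by simp
qed

lemma cycle_edge: assumes "1 \<le> n" "x < NN n" shows "Hr n x (Suc x mod NN n)"
proof -
  consider "x < 8*n - 1" | "x = 8*n - 1" | "8*n \<le> x" "x < NN n - 1" | "x = NN n - 1"
    using assms by linarith
  then show ?thesis
  proof cases
    case 1
    then have "Suc x mod NN n = Suc x" using NN_ge[of n] by simp
    moreover have "Hb n x (Suc x) \<or> Hb n (Suc x) x" using 1 unfolding Hb_def by (cases "odd x") auto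
    ultimately show ?thesis using 1 NN_ge[of n] unfolding Hr_def by auto
  next
    case 2
    then have s: "Suc x mod NN n = 8*n" using NN_ge[of n] assms by simp
    have "odd (8*n - 1)" using assms by presburger
    moreover have "4 * n < 8 * n - 1" using assms by simp
    ultimately have "ST n x (8*n)" unfolding ST_def jx_def 2 using assms by simp
    then have "Hb n x (8*n)" unfolding Hb_def using 2 assms by auto
    then show ?thesis using s assms NN_ge[of n] unfolding Hr_def by auto
  next
    case 3
    then have "Suc x mod NN n = Suc x" by simp
    moreover have "Hb n x (Suc x)" using 3 unfolding Hb_def mm_def by simp
    ultimately show ?thesis using 3 unfolding Hr_def by auto
  next
    case 4
    then have "Suc x mod NN n = 0" using NN_ge[of n] by simp
    moreover have "Hb n 0 x" using 4 unfolding Hb_def by simp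
    moreover have "x < NN n" "0 < NN n" using assms by auto
    ultimately show ?thesis unfolding Hr_def by simp
  qed
qed

lemma end_common: assumes "3 \<le> n" "Hr n 0 z" "Hr n (NN n - 1) z" shows False
proof -
  have "z = 1 \<or> z = NN n - 1" using Hr_0 assms(1,2) by auto
  then show False using not_Hr_last_1[OF assms(1)] Hr_irr[of n] assms(1,3) by auto
qed

lemma tri_pair: assumes "3 \<le> n" "Hr n a b" "Hr n a c" "Hr n b c" "{a, b} = {0, NN n - 1}"
  shows False
proof -
  have "(a = 0 \<and> b = NN n - 1) \<or> (a = NN n - 1 \<and> b = 0)" using assms(5) by (auto simp: doubleton_eq_iff)
  then show False
  proof
    assume "a = 0 \<and> b = NN n - 1" then show False using end_common[OF assms(1)] assms(3,4) by auto
  next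
    assume "a = NN n - 1 \<and> b = 0" then show False using end_common[OF assms(1)] assms(3,4) by auto
  qed
qed

lemma tri_free:
  assumes "3 \<le> n" "Hr n x y" "Hr n x z" "Hr n y z"
  shows False
proof -
  have X1: "odd (x + y) \<or> {x, y} = {0, NN n - 1}" by (rule Hr_parity[OF assms(2)])
  have X2: "odd (x + z) \<or> {x, z} = {0, NN n - 1}" by (rule Hr_parity[OF assms(3)])
  have X3: "odd (y + z) \<or> {y, z} = {0, NN n - 1}" by (rule Hr_parity[OF assms(4)])
  have "even (x + y) \<or> even (x + z) \<or> even (y + z)" by presburger
  then consider "even (x + y)" | "even (x + z)" | "even (y + z)" by blast
  then show False
  proof cases
    case 1 then show False using X1 tri_pair[OF assms(1-4)] by blast
  next
    case 2 then show False using X2 tri_pair[OF assms(1) assms(3) assms(2) Hr_sym[OF assms(4)]] by blast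
  next
    case 3 then show False using X3 tri_pair[OF assms(1) assms(4) Hr_sym[OF assms(2)] Hr_sym[OF assms(3)]] by blast
  qed
qed


lemma card_even_below: "card {v::nat. v < b \<and> even v} = (b + 1) div 2"
proof (induction b)
  case 0 then show ?case by simp
next
  case (Suc b)
  show ?case
  proof (cases "even b")
    case True
    then have "{v. v < Suc b \<and> even v} = insert b {v. v < b \<and> even v}" by (auto simp: less_Suc_eq)
    then have "card {v. v < Suc b \<and> even v} = Suc (card {v. v < b \<and> even v})" by simp
    then show ?thesis using Suc True by presburger
  next
    case False
    then have "{v. v < Suc b \<and> even v} = {v. v < b \<and> even v}" by (auto simp: less_Suc_eq)
    then show ?thesis using Suc False by presburger
  qed
qed

lemma card_odd_below: "card {v::nat. v < b \<and> odd v} = b div 2"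
proof (induction b)
  case 0 then show ?case by simp
next
  case (Suc b)
  show ?case
  proof (cases "odd b")
    case True
    then have "{v. v < Suc b \<and> odd v} = insert b {v. v < b \<and> odd v}" by (auto simp: less_Suc_eq)
    then have "card {v. v < Suc b \<and> odd v} = Suc (card {v. v < b \<and> odd v})" by simp
    then show ?thesis using Suc True by presburger
  next
    case False
    then have "{v. v < Suc b \<and> odd v} = {v. v < b \<and> odd v}" by (auto simp: less_Suc_eq)
    then show ?thesis using Suc False by presburger
  qed
qed

lemma Tev_img:
  "{t. 8*n \<le> t \<and> t < NN n \<and> even (t - 8*n) \<and> P (jx n t)} = (\<lambda>j. 8*n + 2*j) ` {j. j \<le> n*n \<and> P j}"
proof (rule set_eqI, rule iffI)
  fix t assume t: "t \<in> {t. 8*n \<le> t \<and> t < NN n \<and> even (t - 8*n) \<and> P (jx n t)}"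
  then have "t = 8*n + 2 * jx n t" "jx n t \<le> n*n" unfolding jx_def NN_def by auto
  then show "t \<in> (\<lambda>j. 8*n + 2*j) ` {j. j \<le> n*n \<and> P j}" using t by (intro image_eqI[of _ _ "jx n t"]) auto
next
  fix t assume "t \<in> (\<lambda>j. 8*n + 2*j) ` {j. j \<le> n*n \<and> P j}"
  then obtain j where j: "t = 8*n + 2*j" "j \<le> n*n" "P j" by auto
  have "jx n t = j" unfolding jx_def j by simp
  then show "t \<in> {t. 8*n \<le> t \<and> t < NN n \<and> even (t - 8*n) \<and> P (jx n t)}"
    using j unfolding NN_def by auto
qed

lemma Tod_img:
  "{t. 8*n \<le> t \<and> t < NN n \<and> odd (t - 8*n) \<and> P (jx n t)} = (\<lambda>j. 8*n + 1 + 2*j) ` {j. j < n*n \<and> P j}"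
proof (rule set_eqI, rule iffI)
  fix t assume t: "t \<in> {t. 8*n \<le> t \<and> t < NN n \<and> odd (t - 8*n) \<and> P (jx n t)}"
  obtain m where m: "m = n*n" by simp
  have "t - 8*n < 2*m + 1" "odd (t - 8*n)" "8*n \<le> t" using t m unfolding NN_def by auto
  then have "t = 8*n + 1 + 2 * jx n t" "jx n t < n*n" unfolding jx_def m[symmetric] by presburger+
  then show "t \<in> (\<lambda>j. 8*n + 1 + 2*j) ` {j. j < n*n \<and> P j}" using t by (intro image_eqI[of _ _ "jx n t"]) auto
next
  fix t assume "t \<in> (\<lambda>j. 8*n + 1 + 2*j) ` {j. j < n*n \<and> P j}"
  then obtain j where j: "t = 8*n + 1 + 2*j" "j < n*n" "P j" by auto
  have "jx n t = j" unfolding jx_def j by simp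
  then show "t \<in> {t. 8*n \<le> t \<and> t < NN n \<and> odd (t - 8*n) \<and> P (jx n t)}"
    using j unfolding NN_def by auto
qed

lemma card_Tev: "card {t. 8*n \<le> t \<and> t < NN n \<and> even (t - 8*n) \<and> P (jx n t)} = card {j. j \<le> n*n \<and> P j}"
  unfolding Tev_img by (rule card_image) (auto simp: inj_on_def)

lemma card_Tod: "card {t. 8*n \<le> t \<and> t < NN n \<and> odd (t - 8*n) \<and> P (jx n t)} = card {j. j < n*n \<and> P j}"
  unfolding Tod_img by (rule card_image) (auto simp: inj_on_def)

lemma card_row: assumes "a < n" shows "card {j. j < n*n \<and> j div n = a} = n"
proof -
  have "{j. j < n*n \<and> j div n = a} = (\<lambda>b. a*n + b) ` {..<n}"
  proof (rule set_eqI, rule iffI)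
    fix j assume j: "j \<in> {j. j < n*n \<and> j div n = a}"
    then have "j = a*n + j mod n" using div_mult_mod_eq[of j n] by simp
    moreover have "j mod n < n" using assms by simp
    ultimately show "j \<in> (\<lambda>b. a*n + b) ` {..<n}" by (intro image_eqI[of _ _ "j mod n"]) auto
  next
    fix j assume "j \<in> (\<lambda>b. a*n + b) ` {..<n}"
    then obtain b where b: "j = a*n + b" "b < n" by auto
    have "j div n = a" using b by simp
    moreover have "j < n*n"
    proof -
      have "a*n + b < a*n + n" using b by simp
      also have "\<dots> = (a+1)*n" by simp
      also have "\<dots> \<le> n*n" using assms by (intro mult_right_mono) auto
      finally show ?thesis using b by simp
    qed
    ultimately show "j \<in> {j. j < n*n \<and> j div n = a}" by simp
  qed
  then show ?thesis by (simp add: card_image inj_on_def)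
qed

lemma card_col: assumes "b < n" shows "card {j. j < n*n \<and> j mod n = b} = n"
proof -
  have "{j. j < n*n \<and> j mod n = b} = (\<lambda>a. a*n + b) ` {..<n}"
  proof (rule set_eqI, rule iffI)
    fix j assume j: "j \<in> {j. j < n*n \<and> j mod n = b}"
    then have "j = (j div n)*n + b" using div_mult_mod_eq[of j n] by simp
    moreover have "j div n < n" using j by (simp add: less_mult_imp_div_less)
    ultimately show "j \<in> (\<lambda>a. a*n + b) ` {..<n}" by (intro image_eqI[of _ _ "j div n"]) auto
  next
    fix j assume "j \<in> (\<lambda>a. a*n + b) ` {..<n}"
    then obtain a where a: "j = a*n + b" "a < n" by auto
    have "j mod n = b" using a assms by simp
    moreover have "j < n*n"
    proof -
      have "a*n + b < a*n + n" using assms by simp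
      also have "\<dots> = (a+1)*n" by simp
      also have "\<dots> \<le> n*n" using a by (intro mult_right_mono) auto
      finally show ?thesis using a by simp
    qed
    ultimately show "j \<in> {j. j < n*n \<and> j mod n = b}" by simp
  qed
  moreover have "inj_on (\<lambda>a. a*n + b) {..<n}" using assms by (auto simp: inj_on_def)
  ultimately show ?thesis by (simp add: card_image)
qed

lemma div_lt: fixes j n :: nat assumes "j < n*n" shows "j div n < n"
  using assms by (simp add: less_mult_imp_div_less)
lemma mod_lt: fixes j n :: nat assumes "j < n*n" shows "j mod n < n"
  using assms by (metis mod_less_divisor mult_0_right neq0_conv not_less0)


lemma Hr_SS: assumes "s < 8*n" "v < 8*n"
  shows "Hr n s v \<longleftrightarrow> (odd s \<and> even v \<and> s \<le> v + 1) \<or> (odd v \<and> even s \<and> v \<le> s + 1)"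
proof -
  have lt: "s < NN n" "v < NN n" "s \<noteq> NN n - 1" "v \<noteq> NN n - 1" using assms NN_ge[of n] by auto
  show ?thesis unfolding Hr_def Hb_def using assms lt by auto
qed

lemma Hr_ST: assumes "s < 8*n" "8*n \<le> v" "v < NN n"
  shows "Hr n s v \<longleftrightarrow> ST n s v \<or> (s = 0 \<and> v = NN n - 1)"
proof -
  have lt: "s < NN n" using assms NN_ge[of n] by auto
  have "\<not> Hb n v s" unfolding Hb_def using assms by auto
  moreover have "Hb n s v \<longleftrightarrow> ST n s v \<or> (s = 0 \<and> v = NN n - 1)" unfolding Hb_def using assms by auto
  ultimately show ?thesis unfolding Hr_def using lt assms by auto
qed

lemma SN_split: assumes "1 \<le> n" "s < 8*n"
  shows "{v. v < NN n \<and> Hr n s v} =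
     {v. v < 8*n \<and> ((odd s \<and> even v \<and> s \<le> v + 1) \<or> (odd v \<and> even s \<and> v \<le> s + 1))}
   \<union> {t. 8*n \<le> t \<and> t < NN n \<and> ST n s t} \<union> (if s = 0 then {NN n - 1} else {})"
proof (rule set_eqI)
  fix v
  have g: "8*n < NN n" "8 * n \<le> NN n - 1" using NN_ge[of n] by auto
  show "v \<in> {v. v < NN n \<and> Hr n s v} \<longleftrightarrow> v \<in> {v. v < 8*n \<and> ((odd s \<and> even v \<and> s \<le> v + 1) \<or> (odd v \<and> even s \<and> v \<le> s + 1))}
   \<union> {t. 8*n \<le> t \<and> t < NN n \<and> ST n s t} \<union> (if s = 0 then {NN n - 1} else {})"
  proof (cases "v < 8*n")
    case True
    then show ?thesis using Hr_SS[OF assms(2) True] g by auto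
  next
    case False
    then show ?thesis using Hr_ST[OF assms(2), of v] g by auto
  qed
qed

lemma cardA_odd: assumes "odd s" "s < 8*n"
  shows "card {v. v < 8*n \<and> ((odd s \<and> even v \<and> s \<le> v + 1) \<or> (odd v \<and> even s \<and> v \<le> s + 1))} = 4*n - s div 2"
proof -
  have "{v. v < 8*n \<and> ((odd s \<and> even v \<and> s \<le> v + 1) \<or> (odd v \<and> even s \<and> v \<le> s + 1))}
      = {v. v < 8*n \<and> even v} - {v. v < s - 1 \<and> even v}" using assms by auto
  moreover have "{v. v < s - 1 \<and> even v} \<subseteq> {v. v < 8*n \<and> even v}" using assms by auto
  moreover have "card {v. v < 8*n \<and> even v} = 4*n" using card_even_below[of "8*n"] by simp
  moreover have "card {v. v < s - 1 \<and> even v} = s div 2" using card_even_below[of "s - 1"] assms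
    by (metis One_nat_def Suc_pred' add.commute odd_pos plus_1_eq_Suc)
  ultimately show ?thesis by (simp add: card_Diff_subset)
qed

lemma cardA_even: assumes "even s" "s < 8*n"
  shows "card {v. v < 8*n \<and> ((odd s \<and> even v \<and> s \<le> v + 1) \<or> (odd v \<and> even s \<and> v \<le> s + 1))} = (s + 2) div 2"
proof -
  have "s + 2 \<le> 8*n" using assms by presburger
  then have "{v. v < 8*n \<and> ((odd s \<and> even v \<and> s \<le> v + 1) \<or> (odd v \<and> even s \<and> v \<le> s + 1))}
      = {v. v < s + 2 \<and> odd v}" using assms by auto
  then show ?thesis using card_odd_below[of "s+2"] by simp
qed

lemma hdeg_S: assumes "1 \<le> n" "s < 8*n"
  shows "hdeg n s = card {v. v < 8*n \<and> ((odd s \<and> even v \<and> s \<le> v + 1) \<or> (odd v \<and> even s \<and> v \<le> s + 1))}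
     + card {t. 8*n \<le> t \<and> t < NN n \<and> ST n s t} + (if s = 0 then 1 else 0)"
proof -
  let ?A = "{v. v < 8*n \<and> ((odd s \<and> even v \<and> s \<le> v + 1) \<or> (odd v \<and> even s \<and> v \<le> s + 1))}"
  let ?B = "{t. 8*n \<le> t \<and> t < NN n \<and> ST n s t}"
  let ?W = "(if s = 0 then {NN n - 1} else {})"
  have fA: "finite ?A" by auto
  have fB: "finite ?B" by auto
  have d1: "?A \<inter> ?B = {}" by auto
  have d2: "(?A \<union> ?B) \<inter> ?W = {}" using ST_0[OF assms(1)] NN_ge[of n] by auto
  have "hdeg n s = card (?A \<union> ?B \<union> ?W)" unfolding hdeg_def SN_split[OF assms] ..
  also have "\<dots> = card (?A \<union> ?B) + card ?W" using d2 fA fB by (intro card_Un_disjoint) auto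
  also have "card (?A \<union> ?B) = card ?A + card ?B" using d1 fA fB by (intro card_Un_disjoint) auto
  finally show ?thesis by simp
qed

lemma ST_g1: assumes "odd s" "4*n < s" "s < 6*n"
  shows "ST n s t \<longleftrightarrow> even (t - 8*n) \<and> jx n t < n*n \<and> jx n t div n = (s - 4*n - 1) div 2"
proof -
  have k1: "\<And>r. r < n \<Longrightarrow> s \<noteq> 8*n - 1 - 2*r" using assms by arith
  have k2: "\<And>q. s = 4*n + 1 + 2*q \<longleftrightarrow> q = (s - 4*n - 1) div 2"
  proof -
    fix q
    have "\<exists>d. s = 4*n + 1 + 2*d" using assms by presburger
    then obtain d where d: "s = 4*n + 1 + 2*d" by blast
    show "s = 4*n + 1 + 2*q \<longleftrightarrow> q = (s - 4*n - 1) div 2" using d by auto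
  qed
  have k: "\<And>q r. r < n \<Longrightarrow> (s = 4*n + 1 + 2*q \<or> s = 8*n - 1 - 2*r) \<longleftrightarrow> q = (s - 4*n - 1) div 2"
    using k1 k2 by blast
  have "jx n t < n*n \<Longrightarrow> (s = 4*n + 1 + 2*(jx n t div n) \<or> s = 8*n - 1 - 2*(jx n t mod n)) \<longleftrightarrow> jx n t div n = (s - 4*n - 1) div 2"
    using k mod_lt by blast
  then show ?thesis unfolding ST_def using assms by auto
qed

lemma ST_g1': assumes "odd s" "6*n < s" "s < 8*n"
  shows "ST n s t \<longleftrightarrow> even (t - 8*n) \<and> jx n t < n*n \<and> jx n t mod n = (8*n - 1 - s) div 2"
proof -
  have k1: "\<And>q. q < n \<Longrightarrow> s \<noteq> 4*n + 1 + 2*q" using assms by arith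
  have k2: "\<And>r. s = 8*n - 1 - 2*r \<longleftrightarrow> r = (8*n - 1 - s) div 2"
  proof -
    fix r
    have "\<exists>d. 8*n - 1 - s = 2*d" using assms by presburger
    then obtain d where d: "8*n - 1 - s = 2*d" by blast
    have "s = 8*n - 1 - 2*d" using d assms by arith
    then show "s = 8*n - 1 - 2*r \<longleftrightarrow> r = (8*n - 1 - s) div 2" using d assms by auto
  qed
  have k: "\<And>q r. q < n \<Longrightarrow> (s = 4*n + 1 + 2*q \<or> s = 8*n - 1 - 2*r) \<longleftrightarrow> r = (8*n - 1 - s) div 2"
    using k1 k2 by blast
  have "jx n t < n*n \<Longrightarrow> (s = 4*n + 1 + 2*(jx n t div n) \<or> s = 8*n - 1 - 2*(jx n t mod n)) \<longleftrightarrow> jx n t mod n = (8*n - 1 - s) div 2"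
    using k div_lt by blast
  moreover have "4*n < s" using assms by simp
  ultimately show ?thesis unfolding ST_def using assms by auto
qed

lemma ST_g2: assumes "even s" "4*n \<le> s" "s < 6*n"
  shows "ST n s t \<longleftrightarrow> odd (t - 8*n) \<and> jx n t < n*n \<and> jx n t div n = (s - 4*n) div 2"
proof -
  have k: "\<And>q r. r < n \<Longrightarrow> (s = 4*n + 2*q \<or> s = 6*n + 2*r) \<longleftrightarrow> q = (s - 4*n) div 2"
    using assms by presburger
  have "jx n t < n*n \<Longrightarrow> (s = 4*n + 2*(jx n t div n) \<or> s = 6*n + 2*(jx n t mod n)) \<longleftrightarrow> jx n t div n = (s - 4*n) div 2"
    using k mod_lt by blast
  then show ?thesis unfolding ST_def using assms by auto
qed

lemma ST_g2': assumes "even s" "6*n \<le> s" "s < 8*n"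
  shows "ST n s t \<longleftrightarrow> odd (t - 8*n) \<and> jx n t < n*n \<and> jx n t mod n = (s - 6*n) div 2"
proof -
  have k: "\<And>q r. q < n \<Longrightarrow> (s = 4*n + 2*q \<or> s = 6*n + 2*r) \<longleftrightarrow> r = (s - 6*n) div 2"
    using assms by presburger
  have "jx n t < n*n \<Longrightarrow> (s = 4*n + 2*(jx n t div n) \<or> s = 6*n + 2*(jx n t mod n)) \<longleftrightarrow> jx n t mod n = (s - 6*n) div 2"
    using k div_lt by blast
  moreover have "4*n \<le> s" using assms by simp
  ultimately show ?thesis unfolding ST_def using assms by auto
qed

lemma ST_g3: assumes "odd s" "s < 4*n"
  shows "ST n s t \<longleftrightarrow> even (t - 8*n) \<and> jx n t < 3*n"
  unfolding ST_def using assms by auto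

lemma ST_g4: assumes "even s" "2 \<le> s" "s < 4*n"
  shows "ST n s t \<longleftrightarrow> odd (t - 8*n) \<and> jx n t < 7*n"
  unfolding ST_def using assms by auto


definition degS :: "nat \<Rightarrow> nat \<Rightarrow> nat" where
  "degS n s = (if s = 0 then 2 else if odd s then 4*n - s div 2 + (if s < 4*n then 3*n else n)
               else (s + 2) div 2 + (if s < 4*n then 7*n else n))"

lemma B_even: assumes "\<And>t. ST n s t \<longleftrightarrow> even (t - 8*n) \<and> P (jx n t)"
  shows "card {t. 8*n \<le> t \<and> t < NN n \<and> ST n s t} = card {j. j \<le> n*n \<and> P j}"
  using card_Tev[of n P] assms by simp

lemma B_odd: assumes "\<And>t. ST n s t \<longleftrightarrow> odd (t - 8*n) \<and> P (jx n t)"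
  shows "card {t. 8*n \<le> t \<and> t < NN n \<and> ST n s t} = card {j. j < n*n \<and> P j}"
  using card_Tod[of n P] assms by simp

lemma hdeg_degS: assumes n7: "7 \<le> n" and s: "s < 8*n" shows "hdeg n s = degS n s"
proof -
  have n1: "1 \<le> n" using n7 by simp
  have nn: "7*n \<le> n*n" using n7 by simp
  let ?A = "{v. v < 8*n \<and> ((odd s \<and> even v \<and> s \<le> v + 1) \<or> (odd v \<and> even s \<and> v \<le> s + 1))}"
  let ?B = "{t. 8*n \<le> t \<and> t < NN n \<and> ST n s t}"
  have H: "hdeg n s = card ?A + card ?B + (if s = 0 then 1 else 0)" by (rule hdeg_S[OF n1 s])
  show ?thesis
  proof (cases "s = 0")
    case True
    have "card ?A = 1" using cardA_even[of s n] True s by simp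
    moreover have "?B = {}" using ST_0[OF n1] True by auto
    ultimately show ?thesis using H True unfolding degS_def by simp
  next
    case s0: False
    show ?thesis
    proof (cases "odd s")
      case odd: True
      have cA: "card ?A = 4*n - s div 2" using cardA_odd[OF odd s] .
      have "s < 4*n \<or> (4*n < s \<and> s < 6*n) \<or> 6*n < s" using odd by presburger
      then consider "s < 4*n" | "4*n < s" "s < 6*n" | "6*n < s" by blast
      then show ?thesis
      proof cases
        case 1
        have "card ?B = card {j. j \<le> n*n \<and> j < 3*n}" using ST_g3[OF odd 1] by (intro B_even) auto
        also have "{j. j \<le> n*n \<and> j < 3*n} = {..<3*n}" using nn by (auto, linarith)
        finally have "card ?B = 3*n" by simp
        then show ?thesis using H cA s0 odd 1 unfolding degS_def by simp
      next
        case 2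
        have "card ?B = card {j. j \<le> n*n \<and> (j < n*n \<and> j div n = (s - 4*n - 1) div 2)}"
          using ST_g1[OF odd 2] by (intro B_even) auto
        also have "{j. j \<le> n*n \<and> (j < n*n \<and> j div n = (s - 4*n - 1) div 2)} = {j. j < n*n \<and> j div n = (s - 4*n - 1) div 2}" by auto
        also have "card \<dots> = n" using 2 odd by (intro card_row) presburger
        finally show ?thesis using H cA s0 odd 2 unfolding degS_def by simp
      next
        case 3
        have "card ?B = card {j. j \<le> n*n \<and> (j < n*n \<and> j mod n = (8*n - 1 - s) div 2)}"
          using ST_g1'[OF odd 3 s] by (intro B_even) auto
        also have "{j. j \<le> n*n \<and> (j < n*n \<and> j mod n = (8*n - 1 - s) div 2)} = {j. j < n*n \<and> j mod n = (8*n - 1 - s) div 2}" by auto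
        also have "card \<dots> = n" using 3 odd s by (intro card_col) presburger
        finally show ?thesis using H cA s0 odd 3 unfolding degS_def by simp
      qed
    next
      case even: False
      then have ev: "even s" by simp
      have cA: "card ?A = (s + 2) div 2" using cardA_even[OF ev s] .
      have "(2 \<le> s \<and> s < 4*n) \<or> (4*n \<le> s \<and> s < 6*n) \<or> 6*n \<le> s" using ev s0 by presburger
      then consider "2 \<le> s" "s < 4*n" | "4*n \<le> s" "s < 6*n" | "6*n \<le> s" by blast
      then show ?thesis
      proof cases
        case 1
        have "card ?B = card {j. j < n*n \<and> j < 7*n}" using ST_g4[OF ev 1] by (intro B_odd) auto
        also have "{j. j < n*n \<and> j < 7*n} = {..<7*n}" using nn by (auto, linarith)
        finally have "card ?B = 7*n" by simp
        then show ?thesis using H cA s0 ev 1 unfolding degS_def by simp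
      next
        case 2
        have "card ?B = card {j. j < n*n \<and> (j < n*n \<and> j div n = (s - 4*n) div 2)}"
          using ST_g2[OF ev 2] by (intro B_odd) auto
        also have "{j. j < n*n \<and> (j < n*n \<and> j div n = (s - 4*n) div 2)} = {j. j < n*n \<and> j div n = (s - 4*n) div 2}" by auto
        also have "card \<dots> = n" using 2 ev by (intro card_row) presburger
        finally show ?thesis using H cA s0 ev 2 unfolding degS_def by simp
      next
        case 3
        have "card ?B = card {j. j < n*n \<and> (j < n*n \<and> j mod n = (s - 6*n) div 2)}"
          using ST_g2'[OF ev 3 s] by (intro B_odd) auto
        also have "{j. j < n*n \<and> (j < n*n \<and> j mod n = (s - 6*n) div 2)} = {j. j < n*n \<and> j mod n = (s - 6*n) div 2}" by auto
        also have "card \<dots> = n" using 3 ev s by (intro card_col) presburger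
        finally show ?thesis using H cA s0 ev 3 unfolding degS_def by simp
      qed
    qed
  qed
qed

lemma degS_cases: assumes "1 \<le> n" "s < 8*n" shows
 "(s = 0 \<and> degS n s = 2)
  \<or> (odd s \<and> s < 4*n \<and> degS n s = 7*n - s div 2 \<and> 5*n < degS n s \<and> degS n s \<le> 7*n)
  \<or> (odd s \<and> 4*n < s \<and> degS n s = 5*n - s div 2 \<and> n < degS n s \<and> degS n s \<le> 3*n)
  \<or> (even s \<and> 2 \<le> s \<and> s < 4*n \<and> degS n s = s div 2 + 1 + 7*n \<and> 7*n + 1 < degS n s \<and> degS n s \<le> 9*n)
  \<or> (even s \<and> 4*n \<le> s \<and> degS n s = s div 2 + 1 + n \<and> 3*n < degS n s \<and> degS n s \<le> 5*n)"
proof -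
  have "s = 0 \<or> (odd s \<and> s < 4*n) \<or> (odd s \<and> 4*n < s) \<or> (even s \<and> 2 \<le> s \<and> s < 4*n) \<or> (even s \<and> 4*n \<le> s)"
    by presburger
  then consider "s = 0" | "odd s" "s < 4*n" | "odd s" "4*n < s" | "even s" "2 \<le> s" "s < 4*n" | "even s" "4*n \<le> s"
    by blast
  then show ?thesis
  proof cases
    case 1 then show ?thesis unfolding degS_def by simp
  next
    case 2
    then have d: "degS n s = 4*n - s div 2 + 3*n" unfolding degS_def by auto
    have "s div 2 < 2*n" using 2 by presburger
    then have "degS n s = 7*n - s div 2 \<and> 5*n < degS n s \<and> degS n s \<le> 7*n" using d by linarith
    then show ?thesis using 2 by blast
  next
    case 3
    then have d: "degS n s = 4*n - s div 2 + n" unfolding degS_def by auto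
    have "2*n \<le> s div 2" "s div 2 < 4*n" using 3 assms by presburger+
    then have "degS n s = 5*n - s div 2 \<and> n < degS n s \<and> degS n s \<le> 3*n" using d by linarith
    then show ?thesis using 3 by blast
  next
    case 4
    then have d: "degS n s = (s + 2) div 2 + 7*n" unfolding degS_def by auto
    have "(s + 2) div 2 = s div 2 + 1" "1 \<le> s div 2" "s div 2 < 2*n" using 4 by presburger+
    then have "degS n s = s div 2 + 1 + 7*n \<and> 7*n + 1 < degS n s \<and> degS n s \<le> 9*n" using d by linarith
    then show ?thesis using 4 by blast
  next
    case 5
    then have d: "degS n s = (s + 2) div 2 + n" unfolding degS_def using assms by auto
    have "(s + 2) div 2 = s div 2 + 1" "2*n \<le> s div 2" "s div 2 < 4*n" using 5 assms by presburger+
    then have "degS n s = s div 2 + 1 + n \<and> 3*n < degS n s \<and> degS n s \<le> 5*n" using d by linarith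
    then show ?thesis using 5 by blast
  qed
qed

lemma degS_le: assumes "1 \<le> n" "s < 8*n" shows "degS n s \<le> 9*n"
  using degS_cases[OF assms] assms(1) by auto

definition invS :: "nat \<Rightarrow> nat \<Rightarrow> nat" where
  "invS n d = (if d = 2 then 0 else if d \<le> 3*n then 2*(5*n - d) + 1 else if d \<le> 5*n then 2*(d - 1 - n)
     else if d \<le> 7*n then 2*(7*n - d) + 1 else 2*(d - 1 - 7*n))"

lemma invS_degS: assumes "2 \<le> n" "s < 8*n" shows "invS n (degS n s) = s"
proof -
  have n1: "1 \<le> n" using assms by simp
  from degS_cases[OF n1 assms(2)] show ?thesis
  proof (elim disjE conjE)
    assume "s = 0" "degS n s = 2" then show ?thesis unfolding invS_def by simp
  next
    assume a: "odd s" "s < 4*n" "degS n s = 7*n - s div 2" "5*n < degS n s" "degS n s \<le> 7*n"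
    have "s = 2*(s div 2) + 1" using a(1) by presburger
    then show ?thesis using a assms unfolding invS_def by (simp (no_asm_simp); linarith?)
  next
    assume a: "odd s" "4*n < s" "degS n s = 5*n - s div 2" "n < degS n s" "degS n s \<le> 3*n"
    have "s = 2*(s div 2) + 1" using a(1) by presburger
    then show ?thesis using a assms unfolding invS_def by (simp (no_asm_simp); linarith?)
  next
    assume a: "even s" "2 \<le> s" "s < 4*n" "degS n s = s div 2 + 1 + 7*n" "7*n + 1 < degS n s" "degS n s \<le> 9*n"
    have "s = 2*(s div 2)" using a(1) by presburger
    then show ?thesis using a assms unfolding invS_def by (simp (no_asm_simp); linarith?)
  next
    assume a: "even s" "4*n \<le> s" "degS n s = s div 2 + 1 + n" "3*n < degS n s" "degS n s \<le> 5*n"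
    have "s = 2*(s div 2)" using a(1) by presburger
    then show ?thesis using a assms unfolding invS_def by (simp (no_asm_simp); linarith?)
  qed
qed

lemma degS_inj: assumes "2 \<le> n" "s1 < 8*n" "s2 < 8*n" "degS n s1 = degS n s2" shows "s1 = s2"
  using invS_degS[OF assms(1,2)] invS_degS[OF assms(1,3)] assms(4) by metis


lemma Hr_T_right: assumes "8*n \<le> t" "k < mm n" "t + 2*k + 1 < NN n" shows "Hr n t (t + 2*k + 1)"
  unfolding Hr_def Hb_def using assms by auto

lemma Hr_T_left: assumes "8*n + 2*k + 1 \<le> t" "k < mm n" "t < NN n" shows "Hr n t (t - (2*k + 1))"
proof -
  have "Hb n (t - (2*k + 1)) t" unfolding Hb_def using assms by auto
  then show ?thesis unfolding Hr_def using assms by auto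
qed

lemma T_low: assumes n: "19 \<le> n" and t: "8*n \<le> t" "t < NN n" shows "mm n \<le> hdeg n t"
proof -
  have big: "4 * mm n \<le> NN n - 8*n" unfolding mm_def NN_def
  proof -
    have "36*n + 4 \<le> 2*n*n + 1" using n
    proof -
      have "36*n + 4 \<le> 2*19*n" using n by simp
      also have "\<dots> \<le> 2*n*n" using n by simp
      finally show ?thesis by simp
    qed
    then show "4 * (9 * n + 1) \<le> 2 * n * n + 8 * n + 1 - 8 * n" by simp
  qed
  show ?thesis
  proof (cases "t + 2 * mm n < NN n")
    case True
    have sub: "(\<lambda>k. t + 2*k + 1) ` {..<mm n} \<subseteq> {v. v < NN n \<and> Hr n t v}"
      using True t Hr_T_right[of n t] by auto
    have "mm n = card ((\<lambda>k. t + 2*k + 1) ` {..<mm n})" by (simp add: card_image inj_on_def)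
    also have "\<dots> \<le> hdeg n t" unfolding hdeg_def by (rule card_mono[OF _ sub]) simp
    finally show ?thesis .
  next
    case False
    then have tl: "8*n + 2 * mm n \<le> t" using big t by linarith
    have sub: "(\<lambda>k. t - (2*k + 1)) ` {..<mm n} \<subseteq> {v. v < NN n \<and> Hr n t v}"
    proof
      fix v assume "v \<in> (\<lambda>k. t - (2*k + 1)) ` {..<mm n}"
      then obtain k where k: "k < mm n" "v = t - (2*k+1)" by auto
      have "8*n + 2*k + 1 \<le> t" using k tl by linarith
      then show "v \<in> {v. v < NN n \<and> Hr n t v}" using Hr_T_left[of n k t] k t by auto
    qed
    have inj: "inj_on (\<lambda>k. t - (2*k + 1)) {..<mm n}"
      using tl by (auto simp: inj_on_def)
    have "mm n = card ((\<lambda>k. t - (2*k + 1)) ` {..<mm n})" using inj by (simp add: card_image)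
    also have "\<dots> \<le> hdeg n t" unfolding hdeg_def by (rule card_mono[OF _ sub]) simp
    finally show ?thesis .
  qed
qed

lemma Hr_from_T: assumes "1 \<le> n" "8*n \<le> u" "Hr n u v" shows "v < 8*n \<or> (u < v + 2 * mm n \<and> v < u + 2 * mm n)"
proof -
  have "Hb n u v \<or> Hb n v u" using assms(3) unfolding Hr_def by simp
  then show ?thesis
  proof
    assume "Hb n u v"
    then have "u < v \<and> v - u < 2 * mm n" using assms(1,2) unfolding Hb_def by auto
    then show ?thesis by arith
  next
    assume h: "Hb n v u"
    show ?thesis
    proof (cases "v < 8*n")
      case True then show ?thesis by simp
    next
      case False
      then have "v < u \<and> u - v < 2 * mm n" using h assms(1,2) unfolding Hb_def by auto
      then show ?thesis by arith
    qed
  qed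
qed

lemma hdeg_le: assumes n: "7 \<le> n" and u: "u < NN n" shows "hdeg n u \<le> 50*n"
proof (cases "u < 8*n")
  case True
  then show ?thesis using hdeg_degS[OF n True] degS_le[of n u] n by simp
next
  case False
  have sub: "{v. v < NN n \<and> Hr n u v} \<subseteq> {..<8*n} \<union> {u + 1 - 2 * mm n ..< u + 2 * mm n}"
    using Hr_from_T[of n u] False n by force
  have "hdeg n u \<le> card ({..<8*n} \<union> {u + 1 - 2 * mm n ..< u + 2 * mm n})"
    unfolding hdeg_def by (rule card_mono[OF _ sub]) simp
  also have "\<dots> \<le> card {..<8*n} + card {u + 1 - 2 * mm n ..< u + 2 * mm n}" by (rule card_Un_le)
  also have "\<dots> \<le> 8*n + 4 * mm n" by simp
  also have "\<dots> \<le> 50*n" unfolding mm_def using n by simp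
  finally show ?thesis .
qed

lemma a_deg: assumes n: "19 \<le> n" shows "2 * mm n \<le> hdeg n (8*n + 2 * mm n)"
proof -
  let ?a = "8*n + 2 * mm n"
  have big: "8*n + 4 * mm n < NN n" unfolding mm_def NN_def
  proof -
    have "36*n + 4 < 2*n*n + 1"
    proof -
      have "36*n + 4 < 2*19*n" using n by simp
      also have "\<dots> \<le> 2*n*n" using n by simp
      finally show ?thesis by simp
    qed
    then show "8 * n + 4 * (9 * n + 1) < 2 * n * n + 8 * n + 1" by simp
  qed
  let ?R = "(\<lambda>k. ?a + 2*k + 1) ` {..<mm n}"
  let ?L = "(\<lambda>k. ?a - (2*k + 1)) ` {..<mm n}"
  have sR: "?R \<subseteq> {v. v < NN n \<and> Hr n ?a v}" using big Hr_T_right[of n ?a] by auto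
  have sL: "?L \<subseteq> {v. v < NN n \<and> Hr n ?a v}"
  proof
    fix v assume "v \<in> ?L"
    then obtain k where k: "k < mm n" "v = ?a - (2*k+1)" by auto
    then show "v \<in> {v. v < NN n \<and> Hr n ?a v}" using Hr_T_left[of n k ?a] big by auto
  qed
  have cR: "card ?R = mm n" by (simp add: card_image inj_on_def)
  have cL: "card ?L = mm n" by (subst card_image) (auto simp: inj_on_def)
  have d: "?R \<inter> ?L = {}" by auto
  have "2 * mm n = card (?R \<union> ?L)" using cR cL d by (subst card_Un_disjoint) auto
  also have "\<dots> \<le> hdeg n ?a" unfolding hdeg_def by (rule card_mono) (use sR sL in auto)
  finally show ?thesis .
qed

lemma b_nbrs: assumes n: "1 \<le> n" and v: "v < NN n" "Hr n (8*n) v"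
  shows "v \<in> (\<lambda>k. 8*n + 2*k + 1) ` {..<mm n} \<union> {4*n+1, 8*n - 1} \<union> {s. s < 4*n \<and> odd s}"
proof (cases "8*n \<le> v")
  case True
  have "Hb n (8*n) v" using v True unfolding Hr_def Hb_def by auto
  then have "8*n < v" "odd (v - 8*n)" "v - 8*n < 2 * mm n" using True n unfolding Hb_def NN_def by auto
  then obtain k where "v - 8*n = 2*k + 1" by (metis oddE)
  then have "v = 8*n + 2*k + 1" "k < mm n" using \<open>8*n < v\<close> \<open>v - 8*n < 2 * mm n\<close> by auto
  then show ?thesis by auto
next
  case False
  then have "ST n v (8*n)" using Hr_ST[of v n "8*n"] v Hr_sym NN_ge[of n] n by (auto simp: NN_def)
  then have "(odd v \<and> (v = 4*n + 1 \<or> v = 8*n - 1)) \<or> (odd v \<and> v < 4*n)"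
    unfolding ST_def jx_def using n by auto
  then show ?thesis by auto
qed

lemma b_deg: assumes n: "1 \<le> n" shows "hdeg n (8*n) \<le> mm n + 2 + 2*n"
proof -
  let ?X = "(\<lambda>k. 8*n + 2*k + 1) ` {..<mm n}"
  let ?Y = "{4*n+1, 8*n - 1}"
  let ?Z = "{s. s < 4*n \<and> odd s}"
  have "hdeg n (8*n) \<le> card (?X \<union> ?Y \<union> ?Z)"
    unfolding hdeg_def by (rule card_mono) (use b_nbrs[OF n] in auto)
  moreover have "card (?X \<union> ?Y \<union> ?Z) \<le> card (?X \<union> ?Y) + card ?Z" by (rule card_Un_le)
  moreover have "card (?X \<union> ?Y) \<le> card ?X + card ?Y" by (rule card_Un_le)
  moreover have "card ?X \<le> mm n" using card_image_le[of "{..<mm n}"] by simp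
  moreover have "card ?Y \<le> 2" by (simp add: card_insert_le_m1)
  moreover have "card ?Z = 2*n" using card_odd_below[of "4*n"] by simp
  ultimately show ?thesis by linarith
qed


lemma jx_lt: assumes "8*n \<le> t" "t < NN n - 1" shows "jx n t < n*n"
proof -
  obtain m where m: "m = n*n" by simp
  have "t - 8*n < 2*m" using assms m unfolding NN_def by auto
  then show ?thesis unfolding jx_def m[symmetric] by simp
qed

lemma T_eq: assumes "8*n \<le> u" "8*n \<le> v" "even (u - 8*n) \<longleftrightarrow> even (v - 8*n)" "jx n u = jx n v"
  shows "u = v"
proof -
  have "u - 8*n = v - 8*n" using assms(3,4) unfolding jx_def by presburger
  then show ?thesis using assms(1,2) by simp
qed

definition codeT :: "nat \<Rightarrow> nat \<Rightarrow> nat set" where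
  "codeT n t = {s. s < 8*n \<and> Hr n t s}"

lemma codeT_iff: assumes "8*n \<le> t" "t < NN n" "s < 8*n"
  shows "Hr n t s \<longleftrightarrow> ST n s t \<or> (s = 0 \<and> t = NN n - 1)"
  using Hr_ST[OF assms(3,1,2)] Hr_sym by blast

lemma codes_distinct:
  assumes n: "1 \<le> n" and u: "8*n \<le> u" "u < NN n" and v: "8*n \<le> v" "v < NN n" and uv: "u \<noteq> v"
  shows "codeT n u \<noteq> codeT n v"
proof
  assume eq: "codeT n u = codeT n v"
  have mem: "\<And>s. s < 8*n \<Longrightarrow> ST n s u \<Longrightarrow> ST n s v \<or> (s = 0 \<and> v = NN n - 1)"
  proof -
    fix s assume s: "s < 8*n" "ST n s u"
    then have "s \<in> codeT n u" unfolding codeT_def using codeT_iff[OF u s(1)] by auto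
    then have "s \<in> codeT n v" using eq by simp
    then show "ST n s v \<or> (s = 0 \<and> v = NN n - 1)" unfolding codeT_def using codeT_iff[OF v s(1)] by auto
  qed
  have z: "0 \<in> codeT n t \<longleftrightarrow> t = NN n - 1" if "8*n \<le> t" "t < NN n" for t
    unfolding codeT_def using codeT_iff[OF that, of 0] ST_0[OF n] n by auto
  have uN: "u \<noteq> NN n - 1" and vN: "v \<noteq> NN n - 1"
    using z[OF u] z[OF v] eq uv by auto
  then have uN': "u < NN n - 1" "v < NN n - 1" using u v by auto
  have ju: "jx n u < n*n" using jx_lt[OF u(1) uN'(1)] .
  have jv: "jx n v < n*n" using jx_lt[OF v(1) uN'(2)] .
  have q: "jx n u div n < n" "jx n u mod n < n" using div_lt[OF ju] mod_lt[OF ju] by auto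
  show False
  proof (cases "even (u - 8*n)")
    case True
    define rs where "rs = 4*n + 1 + 2*(jx n u div n)"
    define cs where "cs = 8*n - 1 - 2*(jx n u mod n)"
    have rs: "odd rs" "4*n < rs" "rs < 6*n" unfolding rs_def using q by auto
    have gen: "\<And>r. r < n \<Longrightarrow> odd (8*n - 1 - 2*r) \<and> 6*n < 8*n - 1 - 2*r \<and> 8*n - 1 - 2*r < 8*n
       \<and> (8*n - 1 - (8*n - 1 - 2*r)) div 2 = r"
    proof -
      fix r assume r: "r < n"
      have e1: "8*n - 1 - 2*r = 2*(4*n - 1 - r) + 1" using r by arith
      have e2: "8*n - 1 - (8*n - 1 - 2*r) = 2*r" using r by arith
      show "odd (8*n - 1 - 2*r) \<and> 6*n < 8*n - 1 - 2*r \<and> 8*n - 1 - 2*r < 8*n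
       \<and> (8*n - 1 - (8*n - 1 - 2*r)) div 2 = r"
        using r e1 e2 by (simp only: e2) (auto simp: e1)
    qed
    have cinv: "(8*n - 1 - cs) div 2 = jx n u mod n" unfolding cs_def using gen[OF q(2)] by blast
    have cs: "odd cs" "6*n < cs" "cs < 8*n" unfolding cs_def using gen[OF q(2)] by auto
    have r1: "ST n rs u" unfolding ST_g1[OF rs] using True ju by (simp add: rs_def)
    have c1: "ST n cs u" unfolding ST_g1'[OF cs] cinv using True ju by simp
    have r2: "ST n rs v" using mem[OF _ r1] rs vN by auto
    have c2: "ST n cs v" using mem[OF _ c1] cs vN by auto
    have "even (v - 8*n)" "jx n v div n = jx n u div n" using r2 unfolding ST_g1[OF rs] by (auto simp: rs_def)
    moreover have "jx n v mod n = jx n u mod n" using c2 unfolding ST_g1'[OF cs] cinv by simp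
    ultimately have "jx n v = jx n u" by (metis div_mult_mod_eq)
    then show False using T_eq[OF u(1) v(1)] True \<open>even (v - 8*n)\<close> uv by auto
  next
    case False
    define rs where "rs = 4*n + 2*(jx n u div n)"
    define cs where "cs = 6*n + 2*(jx n u mod n)"
    have rs: "even rs" "4*n \<le> rs" "rs < 6*n" unfolding rs_def using q by auto
    have cs: "even cs" "6*n \<le> cs" "cs < 8*n" unfolding cs_def using q by auto
    have r1: "ST n rs u" unfolding ST_g2[OF rs] using False ju by (simp add: rs_def)
    have c1: "ST n cs u" unfolding ST_g2'[OF cs] using False ju by (simp add: cs_def)
    have r2: "ST n rs v" using mem[OF _ r1] rs vN by auto
    have c2: "ST n cs v" using mem[OF _ c1] cs vN by auto
    have "odd (v - 8*n)" "jx n v div n = jx n u div n" using r2 unfolding ST_g2[OF rs] by (auto simp: rs_def)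
    moreover have "jx n v mod n = jx n u mod n" using c2 unfolding ST_g2'[OF cs] by (auto simp: cs_def)
    ultimately have "jx n v = jx n u" by (metis div_mult_mod_eq)
    then show False using T_eq[OF u(1) v(1)] False \<open>odd (v - 8*n)\<close> uv by auto
  qed
qed

lemma HN_sub: assumes "1 \<le> n" shows "{v. v < NN n \<and> Hr n u v} \<subseteq> {..<NN n} - {u}"
  using Hr_irr[OF assms] by auto

lemma nbhd_Eg: "nbhd {..<NN n} (Eg n) u = (if u < NN n then {..<NN n} - {u} - {v. v < NN n \<and> Hr n u v} else {})"
  unfolding nbhd_def Eg_def by auto

lemma deg_Eg: assumes "1 \<le> n" "u < NN n" shows "deg {..<NN n} (Eg n) u = NN n - 1 - hdeg n u"
proof -
  have "deg {..<NN n} (Eg n) u = card ({..<NN n} - {u} - {v. v < NN n \<and> Hr n u v})"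
    unfolding deg_def nbhd_Eg using assms by simp
  also have "\<dots> = card ({..<NN n} - {u}) - card {v. v < NN n \<and> Hr n u v}"
    using HN_sub[OF assms(1), of u] by (intro card_Diff_subset) auto
  also have "\<dots> = NN n - 1 - hdeg n u" unfolding hdeg_def using assms by simp
  finally show ?thesis .
qed

lemma hdeg_lt: assumes "1 \<le> n" "u < NN n" shows "hdeg n u \<le> NN n - 1"
proof -
  have "hdeg n u \<le> card ({..<NN n} - {u})" unfolding hdeg_def by (rule card_mono) (use HN_sub[OF assms(1)] in auto)
  then show ?thesis using assms by simp
qed


lemma not_Hr_even: assumes "even x" "even y" "x \<noteq> 0" "y \<noteq> 0" shows "\<not> Hr n x y"
proof
  assume "Hr n x y"
  then have "odd (x + y) \<or> {x, y} = {0, NN n - 1}" by (rule Hr_parity)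
  then show False using assms by (auto simp: doubleton_eq_iff)
qed

lemma cond2:
  assumes n: "100 \<le> n" and u: "u < NN n" and v: "v < NN n" and uv: "u \<noteq> v"
  shows "\<exists>x y z. x \<in> nbhd {..<NN n} (Eg n) u \<inter> nbhd {..<NN n} (Eg n) v
              \<and> y \<in> nbhd {..<NN n} (Eg n) u \<inter> nbhd {..<NN n} (Eg n) v
              \<and> z \<in> nbhd {..<NN n} (Eg n) u \<inter> nbhd {..<NN n} (Eg n) v
              \<and> Eg n x y \<and> Eg n x z \<and> Eg n y z"
proof -
  let ?C = "{x. 2 \<le> x \<and> x < NN n - 1 \<and> even x}"
  let ?B = "{w. w < NN n \<and> Hr n u w} \<union> {w. w < NN n \<and> Hr n v w} \<union> {u, v}"
  have cC: "card ?C = n*n + 4*n - 1"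
  proof -
    have "?C = {x. x < NN n - 1 \<and> even x} - {x. x < 2 \<and> even x}" by auto
    moreover have "card {x. x < NN n - 1 \<and> even x} = n*n + 4*n"
      using card_even_below[of "NN n - 1"] unfolding NN_def by simp
    moreover have "card {x::nat. x < 2 \<and> even x} = 1" using card_even_below[of 2] by simp
    moreover have "{x::nat. x < 2 \<and> even x} \<subseteq> {x. x < NN n - 1 \<and> even x}" using n unfolding NN_def by auto
    ultimately show ?thesis by (simp add: card_Diff_subset)
  qed
  have cB: "card ?B \<le> 100*n + 2"
  proof -
    have "card ?B \<le> card ({w. w < NN n \<and> Hr n u w} \<union> {w. w < NN n \<and> Hr n v w}) + card {u, v}" by (rule card_Un_le)
    moreover have "card ({w. w < NN n \<and> Hr n u w} \<union> {w. w < NN n \<and> Hr n v w}) \<le> hdeg n u + hdeg n v"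
      unfolding hdeg_def by (rule card_Un_le)
    moreover have "hdeg n u \<le> 50*n" "hdeg n v \<le> 50*n" using hdeg_le n u v by auto
    moreover have "card {u, v} \<le> 2" by (simp add: card_insert_le_m1)
    ultimately show ?thesis by linarith
  qed
  have "3 \<le> card ?C - card ?B"
  proof -
    have "100 * n \<le> n*n" using n by simp
    then show ?thesis using cC cB n by linarith
  qed
  also have "card ?C - card ?B \<le> card (?C - ?B)" by (rule diff_card_le_card_Diff) auto
  finally have c3: "3 \<le> card (?C - ?B)" .
  from card_ge3_obtain[OF c3] obtain x y z where xyz: "x \<in> ?C - ?B" "y \<in> ?C - ?B" "z \<in> ?C - ?B" "x \<noteq> y" "x \<noteq> z" "y \<noteq> z"
    by blast
  have lt: "\<And>w. w \<in> ?C - ?B \<Longrightarrow> w < NN n" by auto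
  have inN: "\<And>w. w \<in> ?C - ?B \<Longrightarrow> w \<in> nbhd {..<NN n} (Eg n) u \<inter> nbhd {..<NN n} (Eg n) v"
    unfolding nbhd_def Eg_def using u v Hr_sym by auto
  have ee: "\<And>w1 w2. w1 \<in> ?C - ?B \<Longrightarrow> w2 \<in> ?C - ?B \<Longrightarrow> w1 \<noteq> w2 \<Longrightarrow> Eg n w1 w2"
  proof -
    fix w1 w2 assume w: "w1 \<in> ?C - ?B" "w2 \<in> ?C - ?B" "w1 \<noteq> w2"
    have "\<not> Hr n w1 w2" using w by (intro not_Hr_even) auto
    then show "Eg n w1 w2" unfolding Eg_def using w by auto
  qed
  have e3: "Eg n x y" "Eg n x z" "Eg n y z" using ee xyz by auto
  have i3: "x \<in> nbhd {..<NN n} (Eg n) u \<inter> nbhd {..<NN n} (Eg n) v"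
     "y \<in> nbhd {..<NN n} (Eg n) u \<inter> nbhd {..<NN n} (Eg n) v"
     "z \<in> nbhd {..<NN n} (Eg n) u \<inter> nbhd {..<NN n} (Eg n) v" using inN xyz by auto
  show ?thesis by (rule exI[of _ x], rule exI[of _ y], rule exI[of _ z]) (simp only: e3 i3 simp_thms)
qed

theorem graph_props:
  assumes n: "100 \<le> n"
  shows "simple_graph {..<NN n} (Eg n)"
    and "Eg n (8*n + 2 * mm n) (8*n)"
    and "card {..<NN n} = NN n"
    and "rigid {..<NN n} (Eg n)"
    and "\<forall>u\<in>{..<NN n}. \<forall>v\<in>{..<NN n}. u \<noteq> v \<longrightarrow>
       (\<exists>x y z. x \<in> nbhd {..<NN n} (Eg n) u \<inter> nbhd {..<NN n} (Eg n) v
              \<and> y \<in> nbhd {..<NN n} (Eg n) u \<inter> nbhd {..<NN n} (Eg n) v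
              \<and> z \<in> nbhd {..<NN n} (Eg n) u \<inter> nbhd {..<NN n} (Eg n) v
              \<and> Eg n x y \<and> Eg n x z \<and> Eg n y z)"
    and "nbhd {..<NN n} (Eg n) (8*n + 2 * mm n) - nbhd {..<NN n} (Eg n) (8*n) \<noteq> {}
         \<and> nbhd {..<NN n} (Eg n) (8*n) - nbhd {..<NN n} (Eg n) (8*n + 2 * mm n) \<noteq> {}"
    and "deg {..<NN n} (Eg n) (8*n + 2 * mm n) < deg {..<NN n} (Eg n) (8*n)"
    and "\<exists>S. S \<subseteq> {..<NN n} - {8*n + 2 * mm n, 8*n}
       \<and> (\<forall>u\<in>S. \<forall>v\<in>{..<NN n} - S. deg {..<NN n} (Eg n) u > deg {..<NN n} (Eg n) v)
       \<and> (\<forall>u\<in>S. \<forall>v\<in>S. u \<noteq> v \<longrightarrow> deg {..<NN n} (Eg n) u \<noteq> deg {..<NN n} (Eg n) v)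
       \<and> (\<forall>u\<in>{..<NN n} - S. \<forall>v\<in>{..<NN n} - S. u \<noteq> v \<longrightarrow>
            nbhd {..<NN n} (Eg n) u \<inter> S \<noteq> nbhd {..<NN n} (Eg n) v \<inter> S)"
    and "\<forall>u\<in>{..<NN n}. NN n - 1 - 50*n \<le> deg {..<NN n} (Eg n) u \<and> deg {..<NN n} (Eg n) u \<le> NN n - 1"
proof -
  have n1: "1 \<le> n" and n3: "3 \<le> n" and n7: "7 \<le> n" and n19: "19 \<le> n" using n by auto
  let ?V = "{..<NN n}" and ?a = "8*n + 2 * mm n" and ?b = "8*n"
  have aN: "?a < NN n"
  proof -
    have "8*n + 2*(9*n+1) < 2*n*n + 8*n + 1"
    proof -
      have "18*n + 2 < 2*19*n" using n by simp
      also have "\<dots> \<le> 2*n*n" using n by simp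
      finally show ?thesis by simp
    qed
    then show ?thesis unfolding mm_def NN_def .
  qed
  have bN: "?b < NN n" using NN_ge[of n] by simp
  show sg: "simple_graph ?V (Eg n)" unfolding simple_graph_def Eg_def using Hr_sym by auto
  have nab: "\<not> Hr n ?a ?b" using n1 by (intro not_Hr_even) (auto simp: mm_def)
  show Eab: "Eg n ?a ?b" unfolding Eg_def using aN bN nab by (auto simp: mm_def)
  show "card ?V = NN n" by simp
  have degf: "\<And>u. u < NN n \<Longrightarrow> deg ?V (Eg n) u = NN n - 1 - hdeg n u" using deg_Eg[OF n1] by simp
  have hlt: "\<And>u. u < NN n \<Longrightarrow> hdeg n u \<le> NN n - 1" using hdeg_lt[OF n1] by simp
  show "\<forall>u\<in>?V. \<forall>v\<in>?V. u \<noteq> v \<longrightarrow> (\<exists>x y z. x \<in> nbhd ?V (Eg n) u \<inter> nbhd ?V (Eg n) v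
              \<and> y \<in> nbhd ?V (Eg n) u \<inter> nbhd ?V (Eg n) v \<and> z \<in> nbhd ?V (Eg n) u \<inter> nbhd ?V (Eg n) v
              \<and> Eg n x y \<and> Eg n x z \<and> Eg n y z)"
    using cond2[OF n] by auto
  have "?b \<in> nbhd ?V (Eg n) ?a - nbhd ?V (Eg n) ?b" "?a \<in> nbhd ?V (Eg n) ?b - nbhd ?V (Eg n) ?a"
  proof -
    have Eba: "Eg n ?b ?a" using Eab nab Hr_sym[of n ?b ?a] unfolding Eg_def by auto
    have nb: "\<not> Eg n ?b ?b" "\<not> Eg n ?a ?a" unfolding Eg_def by simp_all
    show "?b \<in> nbhd ?V (Eg n) ?a - nbhd ?V (Eg n) ?b" "?a \<in> nbhd ?V (Eg n) ?b - nbhd ?V (Eg n) ?a"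
      unfolding nbhd_def using Eab Eba nb aN bN by simp_all
  qed
  then show "nbhd ?V (Eg n) ?a - nbhd ?V (Eg n) ?b \<noteq> {} \<and> nbhd ?V (Eg n) ?b - nbhd ?V (Eg n) ?a \<noteq> {}" by blast
  have "2 * n + 2 < mm n" unfolding mm_def using n by simp
  then have "hdeg n ?b < hdeg n ?a" using a_deg[OF n19] b_deg[OF n1] by linarith
  then show "deg ?V (Eg n) ?a < deg ?V (Eg n) ?b" using degf[OF aN] degf[OF bN] hlt[OF aN] by simp
  let ?S = "{..<8*n}"
  have S1: "\<And>u v. u \<in> ?S \<Longrightarrow> v \<in> ?V - ?S \<Longrightarrow> deg ?V (Eg n) u > deg ?V (Eg n) v"
  proof -
    fix u v assume u: "u \<in> ?S" and v: "v \<in> ?V - ?S"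
    have "hdeg n u \<le> 9*n" using hdeg_degS[OF n7] degS_le[OF n1] u by simp
    moreover have "mm n \<le> hdeg n v" using T_low[OF n19] v by simp
    ultimately have "hdeg n u < hdeg n v" unfolding mm_def by simp
    moreover have uN: "u < NN n" "v < NN n" using u v NN_ge[of n] by auto
    moreover have "hdeg n v \<le> NN n - 1" using hlt uN by simp
    ultimately show "deg ?V (Eg n) u > deg ?V (Eg n) v" using degf[OF uN(1)] degf[OF uN(2)] by linarith
  qed
  have S2: "\<And>u v. u \<in> ?S \<Longrightarrow> v \<in> ?S \<Longrightarrow> u \<noteq> v \<Longrightarrow> deg ?V (Eg n) u \<noteq> deg ?V (Eg n) v"
  proof
    fix u v assume u: "u \<in> ?S" and v: "v \<in> ?S" and uv: "u \<noteq> v" and eq: "deg ?V (Eg n) u = deg ?V (Eg n) v"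
    have uN: "u < NN n" "v < NN n" using u v NN_ge[of n] by auto
    have "hdeg n u = hdeg n v" using eq degf[OF uN(1)] degf[OF uN(2)] hlt[OF uN(1)] hlt[OF uN(2)] by simp
    then have "degS n u = degS n v" using hdeg_degS[OF n7] u v by simp
    then show False using degS_inj[of n u v] n u v uv by simp
  qed
  have S3: "\<And>u v. u \<in> ?V - ?S \<Longrightarrow> v \<in> ?V - ?S \<Longrightarrow> u \<noteq> v \<Longrightarrow> nbhd ?V (Eg n) u \<inter> ?S \<noteq> nbhd ?V (Eg n) v \<inter> ?S"
  proof
    fix u v assume u: "u \<in> ?V - ?S" and v: "v \<in> ?V - ?S" and uv: "u \<noteq> v"
      and eq: "nbhd ?V (Eg n) u \<inter> ?S = nbhd ?V (Eg n) v \<inter> ?S"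
    have form: "\<And>w. w \<in> ?V - ?S \<Longrightarrow> nbhd ?V (Eg n) w \<inter> ?S = ?S - codeT n w"
      unfolding nbhd_def Eg_def codeT_def using NN_ge[of n] by auto
    have "?S - codeT n u = ?S - codeT n v" using eq form[OF u] form[OF v] by simp
    moreover have "codeT n u \<subseteq> ?S" "codeT n v \<subseteq> ?S" unfolding codeT_def by auto
    ultimately have "codeT n u = codeT n v" by blast
    then show False using codes_distinct[OF n1, of u v] u v uv by auto
  qed
  show "\<exists>S. S \<subseteq> ?V - {?a, ?b}
       \<and> (\<forall>u\<in>S. \<forall>v\<in>?V - S. deg ?V (Eg n) u > deg ?V (Eg n) v)
       \<and> (\<forall>u\<in>S. \<forall>v\<in>S. u \<noteq> v \<longrightarrow> deg ?V (Eg n) u \<noteq> deg ?V (Eg n) v)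
       \<and> (\<forall>u\<in>?V - S. \<forall>v\<in>?V - S. u \<noteq> v \<longrightarrow> nbhd ?V (Eg n) u \<inter> S \<noteq> nbhd ?V (Eg n) v \<inter> S)"
    using S1 S2 S3 NN_ge[of n] by (intro exI[of _ ?S]) auto
  show "rigid ?V (Eg n)"
  proof (rule rigid_from_inj[OF sg _ _ S1 S2 S3])
    show "?S \<subseteq> ?V" using NN_ge[of n] by auto
    fix f assume hom: "graph_hom ?V (Eg n) ?V (Eg n) f"
    show "inj_on f ?V"
    proof (rule core_lemma[OF _ _ _ _ _ _ hom])
      show "odd (NN n)" by (rule NN_ge)
      show "3 \<le> NN n" unfolding NN_def using n by simp
      show "\<And>x. \<not> Eg n x x" unfolding Eg_def by simp
      show "\<And>x y. Eg n x y \<Longrightarrow> Eg n y x" unfolding Eg_def using Hr_sym by auto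
      show "\<And>x. x < NN n \<Longrightarrow> \<not> Eg n x (Suc x mod NN n)" unfolding Eg_def using cycle_edge[OF n1] by auto
      show "\<And>x y z. x < NN n \<Longrightarrow> y < NN n \<Longrightarrow> z < NN n \<Longrightarrow> x \<noteq> y \<Longrightarrow> x \<noteq> z \<Longrightarrow> y \<noteq> z
                  \<Longrightarrow> \<not> Eg n x y \<Longrightarrow> \<not> Eg n x z \<Longrightarrow> \<not> Eg n y z \<Longrightarrow> False"
        unfolding Eg_def using tri_free[OF n3] by auto
    qed
  qed
  show "\<forall>u\<in>?V. NN n - 1 - 50*n \<le> deg ?V (Eg n) u \<and> deg ?V (Eg n) u \<le> NN n - 1"
  proof
    fix u assume "u \<in> ?V"
    then have u: "u < NN n" by simp
    have "hdeg n u \<le> 50*n" using hdeg_le[OF n7 u] .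
    then show "NN n - 1 - 50*n \<le> deg ?V (Eg n) u \<and> deg ?V (Eg n) u \<le> NN n - 1"
      using degf[OF u] by linarith
  qed
qed


definition supp5 :: "nat \<Rightarrow> nat set" where "supp5 K = {t. K div 5^t mod 5 \<noteq> 0}"

lemma dig_split: fixes K a b t :: nat assumes "K = a + b * 5^t" "a < 5^t" shows "K div 5^t mod 5 = b mod 5"
proof -
  have "K div 5^t = b + a div 5^t" using assms(1) by simp
  then show ?thesis using assms(2) by simp
qed

lemma pow5_mod: "0 < e \<Longrightarrow> (5::nat)^e mod 5 = 0" by (cases e) auto

lemma pow_split: "t \<le> s \<Longrightarrow> (5::nat)^s = 5^(s-t) * 5^t"
  by (simp flip: power_add)

lemma mul5_mod: "0 < e \<Longrightarrow> (c * (5::nat)^e) mod 5 = 0"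
  using pow5_mod by (simp add: mod_mult_right_eq[symmetric])

lemma lt_pow: assumes "c < 5" "i < t" shows "c * (5::nat)^i < 5^t"
proof -
  have "c * 5^i < 5 * 5^i" using assms by simp
  also have "5 * 5^i = (5::nat)^(Suc i)" by simp
  also have "\<dots> \<le> 5^t" using assms by (intro power_increasing) auto
  finally show ?thesis .
qed

lemma mem_supp5: "t \<in> supp5 K \<longleftrightarrow> K div 5^t mod 5 \<noteq> 0" by (simp add: supp5_def)

lemma supp5_single: assumes c: "1 \<le> c" "c < 5" shows "supp5 (c * 5^s) = {s}"
proof (rule set_eqI)
  fix t
  show "t \<in> supp5 (c * 5^s) \<longleftrightarrow> t \<in> {s}"
  proof (cases "t < s")
    case True
    have "c * 5^s = 0 + (c * 5^(s - t)) * 5^t" using pow_split[of t s] True by simp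
    then have "c * 5^s div 5^t mod 5 = (c * 5^(s-t)) mod 5" by (rule dig_split) simp
    also have "\<dots> = 0" using True by (intro mul5_mod) simp
    finally have d: "c * 5^s div 5^t mod 5 = 0" .
    show ?thesis unfolding mem_supp5 d using True by simp
  next
    case False
    show ?thesis
    proof (cases "t = s")
      case True
      have d: "c * 5^s div 5^t mod 5 = c" using True c by simp
      show ?thesis unfolding mem_supp5 d using True c by simp
    next
      case ne: False
      then have "s < t" using False by simp
      have "c * 5^s < 5^t" using lt_pow[OF c(2) \<open>s < t\<close>] .
      then have "c * 5^s div 5^t = 0" by simp
      then have d: "c * 5^s div 5^t mod 5 = 0" by simp
      show ?thesis unfolding mem_supp5 d using ne by simp
    qed
  qed
qed

lemma supp5_two_lt: assumes p: "1 \<le> p" "p \<le> 2" and q: "1 \<le> q" "q \<le> 2" and ij: "i < j"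
  shows "supp5 (p * 5^i + q * 5^j) = {i, j}"
proof (rule set_eqI)
  fix t
  let ?K = "p * 5^i + q * 5^j"
  have p5: "p < 5" and q5: "q < 5" using p q by auto
  consider "t < i" | "t = i" | "i < t" "t < j" | "t = j" | "j < t" by linarith
  then show "t \<in> supp5 ?K \<longleftrightarrow> t \<in> {i, j}"
  proof cases
    case 1
    have "?K = 0 + (p * 5^(i-t) + q * 5^(j-t)) * 5^t" using 1 ij pow_split[of t i] pow_split[of t j]
      by (simp add: algebra_simps)
    then have "?K div 5^t mod 5 = (p * 5^(i-t) + q * 5^(j-t)) mod 5" by (rule dig_split) simp
    also have "\<dots> = ((p * 5^(i-t)) mod 5 + (q * 5^(j-t)) mod 5) mod 5" by (simp add: mod_add_eq)
    also have "\<dots> = 0" using 1 ij mul5_mod[of "i-t" p] mul5_mod[of "j-t" q] by simp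
    finally have d: "?K div 5^t mod 5 = 0" .
    show ?thesis unfolding mem_supp5 d using 1 ij by simp
  next
    case 2
    have "?K = 0 + (p + q * 5^(j-i)) * 5^t" using 2 ij pow_split[of i j]
      by (simp add: algebra_simps)
    then have "?K div 5^t mod 5 = (p + q * 5^(j-i)) mod 5" by (rule dig_split) simp
    also have "\<dots> = (p mod 5 + (q * 5^(j-i)) mod 5) mod 5" by (simp add: mod_add_eq)
    also have "\<dots> = p" using ij mul5_mod[of "j-i" q] p5 by simp
    finally have d: "?K div 5^t mod 5 = p" .
    show ?thesis unfolding mem_supp5 d using 2 p by simp
  next
    case 3
    have "?K = p * 5^i + (q * 5^(j-t)) * 5^t" using 3 pow_split[of t j]
      by (simp add: algebra_simps)
    then have "?K div 5^t mod 5 = (q * 5^(j-t)) mod 5" by (rule dig_split) (rule lt_pow[OF p5 3(1)])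
    also have "\<dots> = 0" using 3 by (intro mul5_mod) simp
    finally have d: "?K div 5^t mod 5 = 0" .
    show ?thesis unfolding mem_supp5 d using 3 by simp
  next
    case 4
    have "?K div 5^t mod 5 = q mod 5" by (rule dig_split) (use 4 ij lt_pow[OF p5 ij] in simp_all)
    then have d: "?K div 5^t mod 5 = q" using q by simp
    show ?thesis unfolding mem_supp5 d using 4 q ij by simp
  next
    case 5
    have "?K < 5^t"
    proof -
      have "p * 5^i < 5^j" using lt_pow[OF p5 ij] .
      moreover have "q * 5^j \<le> 2 * 5^j" using q by (intro mult_right_mono) auto
      ultimately have "?K < 5^j + 2 * 5^j" by linarith
      also have "\<dots> < 5 * 5^j" by simp
      also have "5 * 5^j = (5::nat)^(Suc j)" by simp
      also have "\<dots> \<le> 5^t" using 5 by (intro power_increasing) auto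
      finally show ?thesis .
    qed
    then have d: "?K div 5^t mod 5 = 0" by simp
    show ?thesis unfolding mem_supp5 d using 5 ij by simp
  qed
qed

lemma supp5_two: assumes p: "1 \<le> p" "p \<le> 2" and q: "1 \<le> q" "q \<le> 2"
  shows "supp5 (p * 5^i + q * 5^j) = {i, j}"
proof -
  consider "i < j" | "i = j" | "j < i" by linarith
  then show ?thesis
  proof cases
    case 1 then show ?thesis using supp5_two_lt[OF p q] by simp
  next
    case 2
    have "p * 5^i + q * 5^j = (p + q) * 5^i" using 2 by (simp add: algebra_simps)
    moreover have "supp5 ((p + q) * 5^i) = {i}" using p q by (intro supp5_single) auto
    ultimately show ?thesis using 2 by simp
  next
    case 3
    have e: "p * 5^i + q * 5^j = q * 5^j + p * 5^i" by simp
    show ?thesis unfolding e using supp5_two_lt[OF q p 3] by (simp add: insert_commute)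
  qed
qed

lemma two_ne_single: assumes p: "1 \<le> p" "p \<le> 2" and q: "1 \<le> q" "q \<le> 2"
  shows "p * 5^i + q * 5^j \<noteq> (5::nat)^s"
proof
  assume eq: "p * 5^i + q * 5^j = 5^s"
  have "supp5 (p * 5^i + q * 5^j) = {i, j}" by (rule supp5_two[OF p q])
  moreover have "supp5 (1 * 5^s) = {s}" by (rule supp5_single) auto
  ultimately have "{i, j} = {s}" using eq by simp
  then have "i = s" "j = s" by auto
  then have e2: "p * 5^s + q * 5^s = (5::nat)^s" using eq by simp
  have "1 * 5^s \<le> p * (5::nat)^s" "1 * 5^s \<le> q * (5::nat)^s" using p q by (intro mult_right_mono; simp)+
  moreover have "(0::nat) < 5^s" by simp
  ultimately show False using e2 by linarith
qed


lemma NN1: "NN k - 1 = 2*k*k + 8*k" unfolding NN_def by simp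

lemma decode:
  fixes M W a b d1 d2 d3 d4 A B :: nat
  assumes MW: "M = 8*W" and a: "a = M*A" and b: "b = M*B"
    and w1: "a \<le> d1" "d1 < a + W" and w2: "a \<le> d2" "d2 < a + W"
    and w3: "b \<le> d3" "d3 < b + W" and w4: "b \<le> d4" "d4 < b + W"
  shows "(d1 + d2 + d3 + d4) div M = 2*A + 2*B"
    and "(d1 + d2 + d3) div M = 2*A + B"
    and "(d1 + d3) div M = A + B"
proof -
  have e1: "M * (2*A + 2*B) = 2*a + 2*b" "M * Suc (2*A + 2*B) = 2*a + 2*b + M" using a b by (simp_all add: algebra_simps)
  have l1: "M * (2*A + 2*B) \<le> d1 + d2 + d3 + d4" unfolding e1 using w1 w2 w3 w4 by linarith
  have u1: "d1 + d2 + d3 + d4 < M * Suc (2*A + 2*B)" unfolding e1 using w1 w2 w3 w4 MW by linarith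
  show "(d1 + d2 + d3 + d4) div M = 2*A + 2*B" using l1 u1 by (rule div_nat_eqI)
  have e2: "M * (2*A + B) = 2*a + b" "M * Suc (2*A + B) = 2*a + b + M" using a b by (simp_all add: algebra_simps)
  have l2: "M * (2*A + B) \<le> d1 + d2 + d3" unfolding e2 using w1 w2 w3 by linarith
  have u2: "d1 + d2 + d3 < M * Suc (2*A + B)" unfolding e2 using w1 w2 w3 MW by linarith
  show "(d1 + d2 + d3) div M = 2*A + B" using l2 u2 by (rule div_nat_eqI)
  have e3: "M * (A + B) = a + b" "M * Suc (A + B) = a + b + M" using a b by (simp_all add: algebra_simps)
  have l3: "M * (A + B) \<le> d1 + d3" unfolding e3 using w1 w3 by linarith
  have u3: "d1 + d3 < M * Suc (A + B)" unfolding e3 using w1 w3 MW by linarith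
  show "(d1 + d3) div M = A + B" using l3 u3 by (rule div_nat_eqI)
qed

lemma decode1:
  fixes M W a d A :: nat
  assumes MW: "M = 8*W" and a: "a = M*A" and w: "a \<le> d" "d < a + W"
  shows "d div M = A"
proof -
  have e: "M * A = a" "M * Suc A = a + M" using a by (simp_all add: algebra_simps)
  have l: "M * A \<le> d" unfolding e using w by linarith
  have u: "d < M * Suc A" unfolding e using w MW by linarith
  show ?thesis using l u by (rule div_nat_eqI)
qed

theorem mainTheorem10:
  fixes l n0 :: nat
  shows "\<exists>(V :: nat \<Rightarrow> nat set) (E :: nat \<Rightarrow> nat \<Rightarrow> nat \<Rightarrow> bool) (a :: nat \<Rightarrow> nat) (b :: nat \<Rightarrow> nat).
    (\<forall>i\<in>{1..l}. simple_graph (V i) (E i) \<and> E i (a i) (b i) \<and> card (V i) \<ge> n0)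
  \<and> (\<forall>i\<in>{1..l}. rigid (V i) (E i))
  \<and> (\<forall>i\<in>{1..l}. \<forall>u\<in>V i. \<forall>v\<in>V i. u \<noteq> v \<longrightarrow>
       (\<exists>x y z. x \<in> nbhd (V i) (E i) u \<inter> nbhd (V i) (E i) v
              \<and> y \<in> nbhd (V i) (E i) u \<inter> nbhd (V i) (E i) v
              \<and> z \<in> nbhd (V i) (E i) u \<inter> nbhd (V i) (E i) v
              \<and> E i x y \<and> E i x z \<and> E i y z))
  \<and> (\<forall>i\<in>{1..l}. nbhd (V i) (E i) (a i) - nbhd (V i) (E i) (b i) \<noteq> {}
                \<and> nbhd (V i) (E i) (b i) - nbhd (V i) (E i) (a i) \<noteq> {})
  \<and> (\<forall>i\<in>{1..l}. deg (V i) (E i) (a i) < deg (V i) (E i) (b i))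
  \<and> (\<forall>i\<in>{1..l}. \<forall>j\<in>{1..l}. i < j \<longrightarrow>
       (\<forall>u\<in>V i. \<forall>v\<in>V j. deg (V i) (E i) u < deg (V j) (E j) v))
  \<and> (\<forall>i\<in>{1..l}. \<forall>j\<in>{1..l}. \<forall>i'\<in>{1..l}. \<forall>j'\<in>{1..l}. {i, j} \<noteq> {i', j'} \<longrightarrow>
       degsums (V i) (E i) (V j) (E j) \<inter> degsums (V i') (E i') (V j') (E j') = {})
  \<and> (\<Union>i\<in>{1..l}. \<Union>j\<in>{1..l}. degsums (V i) (E i) (V j) (E j))
       \<inter> {deg (V t) (E t) w | t w. t \<in> {1..l} \<and> w \<in> V t} = {}
  \<and> (\<forall>i\<in>{1..l}. \<exists>S. S \<subseteq> V i - {a i, b i}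
       \<and> (\<forall>u\<in>S. \<forall>v\<in>V i - S. deg (V i) (E i) u > deg (V i) (E i) v)
       \<and> (\<forall>u\<in>S. \<forall>v\<in>S. u \<noteq> v \<longrightarrow> deg (V i) (E i) u \<noteq> deg (V i) (E i) v)
       \<and> (\<forall>u\<in>V i - S. \<forall>v\<in>V i - S. u \<noteq> v \<longrightarrow>
            nbhd (V i) (E i) u \<inter> S \<noteq> nbhd (V i) (E i) v \<inter> S))"
proof -
  define Q where "Q = 216 * 5^l + n0 + 200"
  define W where "W = 54 * Q"
  define M where "M = 8 * W"
  define T where "T = (\<lambda>t::nat. M * 5^t)"
  define P where "P = (\<lambda>t k. 100 \<le> k \<and> T t + 50*k \<le> NN k - 1)"
  define nn where "nn = (\<lambda>t. LEAST k. P t k)"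
  have MQ: "M = 432 * Q" unfolding M_def W_def by simp
  have Qge: "n0 \<le> Q" "200 \<le> Q" unfolding Q_def by auto
  have Tge: "\<And>t. M \<le> T t" unfolding T_def by simp
  have nnP: "100 \<le> nn t \<and> T t + 50 * nn t \<le> NN (nn t) - 1 \<and> NN (nn t) - 1 < T t + W" if tl: "t \<le> l" for t
  proof -
    have ex: "P t (T t + 100)"
    proof -
      define k where "k = T t + 100"
      have k1: "100 * k \<le> k * k" unfolding k_def by (rule mult_right_mono) auto
      have k2: "T t \<le> k" "100 \<le> k" unfolding k_def by auto
      have k3: "NN k - 1 = 2*(k*k) + 8*k" unfolding NN1 by simp
      have "T t + 50*k \<le> NN k - 1" unfolding k3 using k1 k2 by linarith
      then show ?thesis unfolding P_def k_def[symmetric] using k2 by simp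
    qed
    have Pn: "P t (nn t)" unfolding nn_def by (rule LeastI[of "P t", OF ex])
    have least: "\<And>k. k < nn t \<Longrightarrow> \<not> P t k" unfolding nn_def by (rule not_less_Least)
    have upper: "NN (nn t) - 1 < T t + W"
    proof (cases "nn t = 100")
      case True
      have "NN (nn t) - 1 = 20800" unfolding True NN1 by simp
      moreover have "86400 \<le> M" using MQ Qge by simp
      ultimately show ?thesis using Tge[of t] by simp
    next
      case False
      then have n100: "100 < nn t" using Pn unfolding P_def by simp
      define x where "x = nn t - 1"
      have xn: "nn t = Suc x" "100 \<le> x" using n100 unfolding x_def by auto
      have "\<not> P t x" using least[of x] xn by simp
      moreover have "NN x - 1 = 2*(x*x) + 8*x" unfolding NN1 by simp
      ultimately have h: "T t + 50*x > 2*(x*x) + 8*x" using xn unfolding P_def by simp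
      have NNn: "NN (nn t) - 1 = 2*(x*x) + 12*x + 10" unfolding xn NN1 by (simp add: algebra_simps)
      have xQ: "x < Q"
      proof (rule ccontr)
        assume "\<not> x < Q"
        then have Qx: "Q \<le> x" by simp
        define c where "c = 2*Q - 42"
        have c42: "c + 42 = 2*Q" unfolding c_def using Qge by simp
        have f1: "Q*x \<le> x*x" using Qx by (rule mult_right_mono) simp
        have cx: "c*x + 42*x = 2*(Q*x)" using c42 by (metis add_mult_distrib mult.assoc)
        have f2: "c*Q \<le> c*x" using Qx by (rule mult_left_mono) simp
        have "432*5^l \<le> c" unfolding c_def Q_def by simp
        then have f3: "(432*5^l)*Q \<le> c*Q" by (rule mult_right_mono) simp
        have f4: "T t \<le> M*5^l" unfolding T_def using tl by (intro mult_left_mono power_increasing) auto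
        have f5: "M*5^l = (432*5^l)*Q" unfolding MQ by simp
        show False using h f1 cx f2 f3 f4 f5 by linarith
      qed
      show ?thesis using NNn xQ h unfolding W_def by linarith
    qed
    show ?thesis using Pn upper unfolding P_def by simp
  qed
  define V where "V = (\<lambda>i. {..<NN (nn i)})"
  define E where "E = (\<lambda>i. Eg (nn i))"
  define a where "a = (\<lambda>i. 8 * nn i + 2 * mm (nn i))"
  define b where "b = (\<lambda>i. 8 * nn i)"
  have GP: "100 \<le> nn i" if "i \<in> {1..l}" for i using nnP[of i] that by auto
  note gp = graph_props[OF GP]
  have wind: "T i \<le> deg (V i) (E i) u \<and> deg (V i) (E i) u < T i + W" if i: "i \<in> {1..l}" and u: "u \<in> V i" for i u
  proof -
    have "NN (nn i) - 1 - 50 * nn i \<le> deg (V i) (E i) u \<and> deg (V i) (E i) u \<le> NN (nn i) - 1"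
      using gp(9)[OF i] u unfolding V_def E_def by blast
    then show ?thesis using nnP[of i] i by auto
  qed
  have keyS: "deg (V t) (E t) w div M = 5^t" if t: "t \<in> {1..l}" and w: "w \<in> V t" for t w
    using decode1[of M W "T t" "5^t" "deg (V t) (E t) w"] wind[OF t w] unfolding M_def T_def by simp
  have keyD: "\<exists>p q. 1 \<le> p \<and> p \<le> 2 \<and> 1 \<le> q \<and> q \<le> 2 \<and> x div M = p * 5^i + q * 5^j"
    if i: "i \<in> {1..l}" and j: "j \<in> {1..l}" and x: "x \<in> degsums (V i) (E i) (V j) (E j)" for i j x
  proof -
    let ?d = "\<lambda>k u. deg (V k) (E k) u"
    have dec: "\<And>u u' v v'. u \<in> V i \<Longrightarrow> u' \<in> V i \<Longrightarrow> v \<in> V j \<Longrightarrow> v' \<in> V j \<Longrightarrow>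
        (?d i u + ?d i u' + ?d j v + ?d j v') div M = 2*5^i + 2*5^j \<and>
        (?d i u + ?d i u' + ?d j v) div M = 2*5^i + 5^j \<and>
        (?d i u + ?d j v) div M = 5^i + 5^j"
    proof -
      fix u u' v v' assume uv: "u \<in> V i" "u' \<in> V i" "v \<in> V j" "v' \<in> V j"
      have ww: "T i \<le> ?d i u" "?d i u < T i + W" "T i \<le> ?d i u'" "?d i u' < T i + W"
        "T j \<le> ?d j v" "?d j v < T j + W" "T j \<le> ?d j v'" "?d j v' < T j + W"
        using wind[OF i uv(1)] wind[OF i uv(2)] wind[OF j uv(3)] wind[OF j uv(4)] by auto
      note D = decode[of M W "T i" "5^i" "T j" "5^j", OF M_def _ _ ww]
      show "(?d i u + ?d i u' + ?d j v + ?d j v') div M = 2*5^i + 2*5^j \<and>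
        (?d i u + ?d i u' + ?d j v) div M = 2*5^i + 5^j \<and>
        (?d i u + ?d j v) div M = 5^i + 5^j"
        using D unfolding T_def by simp
    qed
    from x show ?thesis unfolding degsums_def
    proof (elim UnE CollectE exE conjE)
      fix u u' v v' assume "x = ?d i u + ?d i u' + ?d j v + ?d j v'" "u \<in> V i" "u' \<in> V i" "v \<in> V j" "v' \<in> V j"
      then show ?thesis using dec by (intro exI[of _ 2] exI[of _ 2]) auto
    next
      fix u u' v assume "x = ?d i u + ?d i u' + ?d j v" "u \<in> V i" "u' \<in> V i" "v \<in> V j"
      then show ?thesis using dec[of u u' v v] by (intro exI[of _ 2] exI[of _ 1]) auto
    next
      fix u v assume "x = ?d i u + ?d j v" "u \<in> V i" "v \<in> V j"
      then show ?thesis using dec[of u u v v] by (intro exI[of _ 1] exI[of _ 1]) auto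
    qed
  qed
  have suppD: "supp5 (x div M) = {i, j}"
    if i: "i \<in> {1..l}" and j: "j \<in> {1..l}" and x: "x \<in> degsums (V i) (E i) (V j) (E j)" for i j x
  proof -
    obtain p q where pq: "1 \<le> p" "p \<le> 2" "1 \<le> q" "q \<le> 2" "x div M = p * 5^i + q * 5^j"
      using keyD[OF i j x] by blast
    show ?thesis unfolding pq(5) by (rule supp5_two[OF pq(1-4)])
  qed
  have C1: "\<forall>i\<in>{1..l}. simple_graph (V i) (E i) \<and> E i (a i) (b i) \<and> card (V i) \<ge> n0"
  proof
    fix i assume i: "i \<in> {1..l}"
    show "simple_graph (V i) (E i) \<and> E i (a i) (b i) \<and> card (V i) \<ge> n0"
    proof (intro conjI)
      show "simple_graph (V i) (E i)" unfolding V_def E_def by (rule gp(1)[OF i])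
      show "E i (a i) (b i)" unfolding E_def a_def b_def by (rule gp(2)[OF i])
      have "n0 \<le> T i" using Tge[of i] MQ Qge by simp
      then show "card (V i) \<ge> n0" using nnP[of i] i unfolding V_def by auto
    qed
  qed
  have C2: "\<forall>i\<in>{1..l}. rigid (V i) (E i)"
    unfolding V_def E_def using gp(4) by blast
  have C3: "\<forall>i\<in>{1..l}. \<forall>u\<in>V i. \<forall>v\<in>V i. u \<noteq> v \<longrightarrow>
       (\<exists>x y z. x \<in> nbhd (V i) (E i) u \<inter> nbhd (V i) (E i) v
              \<and> y \<in> nbhd (V i) (E i) u \<inter> nbhd (V i) (E i) v
              \<and> z \<in> nbhd (V i) (E i) u \<inter> nbhd (V i) (E i) v
              \<and> E i x y \<and> E i x z \<and> E i y z)"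
    unfolding V_def E_def using gp(5) by blast
  have C4: "\<forall>i\<in>{1..l}. nbhd (V i) (E i) (a i) - nbhd (V i) (E i) (b i) \<noteq> {}
                \<and> nbhd (V i) (E i) (b i) - nbhd (V i) (E i) (a i) \<noteq> {}"
    unfolding V_def E_def a_def b_def using gp(6) by blast
  have C5: "\<forall>i\<in>{1..l}. deg (V i) (E i) (a i) < deg (V i) (E i) (b i)"
    unfolding V_def E_def a_def b_def using gp(7) by blast
  have C6: "\<forall>i\<in>{1..l}. \<forall>j\<in>{1..l}. i < j \<longrightarrow>
       (\<forall>u\<in>V i. \<forall>v\<in>V j. deg (V i) (E i) u < deg (V j) (E j) v)"
  proof (intro ballI impI)
    fix i j u v assume i: "i \<in> {1..l}" and j: "j \<in> {1..l}" and ij: "i < j" and u: "u \<in> V i" and v: "v \<in> V j"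
    have "T i + W \<le> T j"
    proof -
      have "(5::nat)^(Suc i) \<le> 5^j" using ij by (intro power_increasing) auto
      then have "5 * 5^i \<le> (5::nat)^j" by simp
      then have h1: "M * (5 * 5^i) \<le> M * 5^j" by (rule mult_left_mono) simp
      have h2: "M * (5 * 5^i) = 5 * (M * 5^i)" by simp
      have h3: "W \<le> M * 5^i" using Tge[of i] unfolding T_def M_def by simp
      show ?thesis unfolding T_def using h1 h2 h3 by linarith
    qed
    then show "deg (V i) (E i) u < deg (V j) (E j) v" using wind[OF i u] wind[OF j v] by linarith
  qed
  have C7: "\<forall>i\<in>{1..l}. \<forall>j\<in>{1..l}. \<forall>i'\<in>{1..l}. \<forall>j'\<in>{1..l}. {i, j} \<noteq> {i', j'} \<longrightarrow>
       degsums (V i) (E i) (V j) (E j) \<inter> degsums (V i') (E i') (V j') (E j') = {}"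
  proof (intro ballI impI)
    fix i j i' j' assume i: "i \<in> {1..l}" and j: "j \<in> {1..l}" and i': "i' \<in> {1..l}" and j': "j' \<in> {1..l}"
      and ne: "{i, j} \<noteq> {i', j'}"
    show "degsums (V i) (E i) (V j) (E j) \<inter> degsums (V i') (E i') (V j') (E j') = {}"
    proof (rule ccontr)
      assume "degsums (V i) (E i) (V j) (E j) \<inter> degsums (V i') (E i') (V j') (E j') \<noteq> {}"
      then obtain x where x1: "x \<in> degsums (V i) (E i) (V j) (E j)" and x2: "x \<in> degsums (V i') (E i') (V j') (E j')" by blast
      show False using suppD[OF i j x1] suppD[OF i' j' x2] ne by simp
    qed
  qed
  have C8: "(\<Union>i\<in>{1..l}. \<Union>j\<in>{1..l}. degsums (V i) (E i) (V j) (E j))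
       \<inter> {deg (V t) (E t) w | t w. t \<in> {1..l} \<and> w \<in> V t} = {}"
  proof (rule ccontr)
    assume "\<not> ?thesis"
    then obtain x i j t w where i: "i \<in> {1..l}" and j: "j \<in> {1..l}" and x: "x \<in> degsums (V i) (E i) (V j) (E j)"
      and t: "t \<in> {1..l}" and w: "w \<in> V t" and xd: "x = deg (V t) (E t) w" by blast
    obtain p q where pq: "1 \<le> p" "p \<le> 2" "1 \<le> q" "q \<le> 2" "x div M = p * 5^i + q * 5^j" using keyD[OF i j x] by blast
    have "x div M = 5^t" using keyS[OF t w] xd by simp
    then show False using two_ne_single[OF pq(1-4)] pq(5) by simp
  qed
  have C9: "\<forall>i\<in>{1..l}. \<exists>S. S \<subseteq> V i - {a i, b i}
       \<and> (\<forall>u\<in>S. \<forall>v\<in>V i - S. deg (V i) (E i) u > deg (V i) (E i) v)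
       \<and> (\<forall>u\<in>S. \<forall>v\<in>S. u \<noteq> v \<longrightarrow> deg (V i) (E i) u \<noteq> deg (V i) (E i) v)
       \<and> (\<forall>u\<in>V i - S. \<forall>v\<in>V i - S. u \<noteq> v \<longrightarrow>
            nbhd (V i) (E i) u \<inter> S \<noteq> nbhd (V i) (E i) v \<inter> S)"
    unfolding V_def E_def a_def b_def using gp(8) by blast
  show ?thesis
    apply (rule exI[of _ V], rule exI[of _ E], rule exI[of _ a], rule exI[of _ b])
    using C1 C2 C3 C4 C5 C6 C7 C8 C9 by (intro conjI) assumption+
qed


end
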